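(* Let $L$ be a library and $(\tau,\rho)\in[\![L]\!]$. Then there is a good client $C$ compatible with $L$ such that $(\tau,\rho')\in[\![C]\!]$ for some configuration $\rho'$.
   Context: Language HOLiB. Types: $\theta ::= \mathtt{unit}\mid\mathtt{int}\mid\theta\times\theta\mid\theta\to\theta$. There are countably infinite pairwise disjoint typed sets of method names $\mathsf{Meths}=\biguplus_{\theta,\theta'}\mathsf{Meths}_{\theta,\theta'}$, global reference names $\mathsf{Refs}=\biguplus_{\theta\text{ not a product}}\mathsf{Refs}_\theta$ and variables $\mathsf{Vars}=\biguplus_\theta\mathsf{Vars}_\theta$ (ranged over by $m,r,x$); $i$ ranges over integers, $\oplus$ over a fixed set of binary integer operations. Terms: $M ::= m\mid i\mid ()\mid x\mid \lambda x.M\mid r:=M\mid {!r}\mid M\oplus M\mid \langle M,M\rangle\mid \pi_1M\mid\pi_2M\mid MM\mid \mathtt{if}\ M\ \mathtt{then}\ M\ \mathtt{else}\ M\mid \mathtt{letrec}\ x=\lambda x.M\ \mathtt{in}\ M\mid \mathtt{let}\ x=M\ \mathtt{in}\ M\mid \mathtt{assert}(M)\mid [\![M]\!]$, where $[\![M]\!]$ is a runtime "evaluation box"; terms are typed in the standard way ($m:\theta\to\theta'$ for $m\in\mathsf{Meths}_{\theta,\theta'}$; ${!r}:\theta$ and $r:=M:\mathtt{unit}$ for $r\in\mathsf{Refs}_\theta$, $M:\theta$; conditions, $\oplus$-operands and assert arguments have type int; $\mathtt{assert}(M):\mathtt{unit}$). Libraries: $L ::= B\mid \mathtt{abstract}\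 m; L$; blocks $B ::= \varepsilon\mid \mathtt{public}\ m=\lambda x.M;B\mid m=\lambda x.M;B\mid \mathtt{ref}\ r:=i;B\mid\mathtt{ref}\ r:=\lambda x.M;B$; each non-abstract method and each reference is defined once with matching types, abstract/public/private methods are disjoint, and only defined or abstract names are mentioned. A client is $C = L;\ \mathtt{main}=M$ with $M:\mathtt{unit}$. A client is good if it contains no assertions. Values $v ::= m\mid i\mid ()\mid\langle v,v\rangle$; evaluation contexts $E ::= \bullet\mid \mathtt{assert}(E)\mid r:=E\mid E\oplus M\mid v\oplus E\mid \langle E,M\rangle\mid\langle v,E\rangle\mid \pi_jE\mid mE\mid \mathtt{let}\ x=E\ \mathtt{in}\ M\mid \mathtt{if}\ E\ \mathtt{then}\ M\ \mathtt{else}\ M\mid [\![E]\!]$. A repository $R$ is a finite partial map from method names to terms $\lambda x.M$; a store $S$ is a finite partial map from references to values; $k\in\mathbb{N}$ is the call-depth counter. Reduction $(E[\cdot],R,S,k)\to(E[\cdot],R',S',k')$: $\mathtt{let}\ x=v\ \mathtt{in}\ M\mapsto M\{v/x\}$; $\pi_j\langle v_1,v_2\rangle\mapsto v_j$; $r:=v\mapsto()$ with $S[r\mapsto v]$; ${!r}\mapsto S(r)$; $\mathtt{if}\ i\ \mathtt{then}\ M_1\ \mathtt{else}\ M_0\mapsto M_1$ if $i\neq0$, $M_0$ if $i=0$; $i_1\oplus i_2\mapsto$ the integer $i_1\oplus i_2$; $\lambda x.M\mapsto m$ with $R\uplus\{m\mapsto\lambda x.M\}$, $m$ fresh; $\mathtt{assert}(i)\mapsto()$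 if $i\ne0$ (no rule for $\mathtt{assert}(0)$); $mv\mapsto[\![M\{v/x\}]\!]$ with $k+1$ if $R(m)=\lambda x.M$; $[\![v]\!]\mapsto v$ with $k+1$ replaced by $k$; $\mathtt{letrec}\ f=\lambda x.M\ \mathtt{in}\ M'\mapsto M'\{m/f\}$ with $R\uplus\{m\mapsto\lambda x.M\{m/f\}\}$, $m$ fresh. Building: $L$ builds to $(\varepsilon,R,S,\mathcal P,\mathcal A)$ if $(L,\emptyset,\emptyset,\emptyset,\emptyset)$ reaches it by processing declarations left to right: $\mathtt{abstract}\ m$ adds $m$ to $\mathcal A$; $\mathtt{public}\ m=\lambda x.M$ adds $m\mapsto\lambda x.M$ to $R$ and $m$ to $\mathcal P$; $m=\lambda x.M$ adds $m\mapsto\lambda x.M$ to $R$; $\mathtt{ref}\ r:=i$ adds $r\mapsto i$ to $S$; $\mathtt{ref}\ r:=\lambda x.M$ adds $m\mapsto\lambda x.M$ to $R$ and $r\mapsto m$ to $S$ for fresh $m$. Client $L;\mathtt{main}=M$ builds to $(M,R,S,\mathcal P,\mathcal A)$ when $L$ builds to $(\varepsilon,R,S,\mathcal P,\mathcal A)$. Trace semantics: evaluation stacks $\mathcal E ::= \varepsilon\mid (m,E)::\mathcal E\mid (m,l)::\mathcal E$ ($l\in\mathbb N$). $P$-configurations $(\mathcal E,M,R,S,\mathcal P,\mathcal A,k)_p$ and $O$-configurations $(\mathcal E,l,R,S,\mathcal P,\mathcal A,k)_o$, with $\mathcal P,\mathcal A\subseteq\mathsf{Meths}$ (public and abstract names).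 Transitions: (INT) $(\mathcal E,M,R,S,\mathcal P,\mathcal A,k)_p\to(\mathcal E,M',R',S',\mathcal P,\mathcal A,k')_p$ whenever $(M,R,S,k)\to(M',R',S',k')$; (PQ) $(\mathcal E,E[mv],R,S,\mathcal P,\mathcal A,k)_p\xrightarrow{\mathtt{call}(m,v)}((m,E)::\mathcal E,0,R,S,\mathcal P',\mathcal A,k)_o$ with $m\in\mathcal A$; (OQ) $(\mathcal E,l,R,S,\mathcal P,\mathcal A,k)_o\xrightarrow{\mathtt{call}(m,v)}((m,l+1)::\mathcal E,mv,R,S,\mathcal P,\mathcal A',k)_p$ with $m\in\mathcal P$ and $R(m)$ defined; (PA) $((m,l)::\mathcal E,v,R,S,\mathcal P,\mathcal A,k)_p\xrightarrow{\mathtt{ret}(m,v)}(\mathcal E,l,R,S,\mathcal P',\mathcal A,k)_o$; (OA) $((m,E)::\mathcal E,l,R,S,\mathcal P,\mathcal A,k)_o\xrightarrow{\mathtt{ret}(m,v)}(\mathcal E,E[v],R,S,\mathcal P,\mathcal A',k)_p$. In $P$-moves $\mathcal P'=\mathcal P\cup(\mathsf{Meths}(v)\cap\mathrm{dom}(R))$; in $O$-moves $v$ is any value of the expected type and $\mathcal A'=\mathcal A\cup(\mathsf{Meths}(v)\setminus\mathrm{dom}(R))$, where $\mathsf{Meths}(v)$ is the set of method names in $v$. Semantics: $[\![L]\!]=\{(\tau,\rho)\mid L\text{ builds to }(\varepsilon,R,S,\mathcal P,\mathcal A)\text{ and }(\varepsilon,0,R,S,\mathcal P,\mathcal A,0)_o\xrightarrow{\tau}{}^{*}\rho\}$,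 and for a client $C$, $[\![C]\!]=\{(\tau,\rho)\mid C\text{ builds to }(M,R,S,\mathcal P,\mathcal A)\text{ and }(\varepsilon,M,R,S,\mathcal P,\mathcal A,0)_p\xrightarrow{\tau}{}^{*}\rho\}$, where $\tau$ is the sequence of move labels $\mathtt{call}(m,v)$/$\mathtt{ret}(m,v)$. Compatibility: $L$ and $C$ are compatible if $L$ builds to $(\varepsilon,R,S,\mathcal P,\mathcal A)$, $C$ builds to $(M,R',S',\mathcal P',\mathcal A')$, $\mathcal P=\mathcal A'$, $\mathcal A=\mathcal P'$, $\mathrm{dom}(S)\cap\mathrm{dom}(S')=\emptyset$ and $\mathrm{dom}(R)\cap\mathrm{dom}(R')=\emptyset$. *)

theory Defs
  imports Main
begin

section \<open>Syntax of HOLiB\<close>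

datatype ty = TUnit | TInt | TProd ty ty | TArrow ty ty

text \<open>Typed names: a name carries its type, so each typed name set is countably infinite
  and the typed sets are pairwise disjoint.  \<open>Meth n a b\<close> is in Meths_{a,b};
  \<open>Ref n t\<close> is a reference name of type t (only non-product t are legitimate
  references); \<open>Var n t\<close> is a variable of type t.\<close>
datatype meth = Meth nat ty ty
datatype ref = Ref nat ty
datatype var = Var nat ty

fun argty :: "meth \<Rightarrow> ty" where "argty (Meth n a b) = a"
fun resty :: "meth \<Rightarrow> ty" where "resty (Meth n a b) = b"
fun refty :: "ref \<Rightarrow> ty" where "refty (Ref n t) = t"
fun varty :: "var \<Rightarrow> ty" where "varty (Var n t) = t"

fun is_prod :: "ty \<Rightarrow> bool" where
  "is_prod (TProd a b) = True"
| "is_prod _ = False"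

datatype binop = Plus | Minus | Times | Equal | Less

fun opsem :: "binop \<Rightarrow> int \<Rightarrow> int \<Rightarrow> int" where
  "opsem Plus i j = i + j"
| "opsem Minus i j = i - j"
| "opsem Times i j = i * j"
| "opsem Equal i j = (if i = j then 1 else 0)"
| "opsem Less i j = (if i < j then 1 else 0)"

datatype tm =
    MethT meth
  | IntT int
  | UnitT
  | VarT var
  | Lam var tm
  | Assign ref tm
  | Deref ref
  | BinOp binop tm tm
  | Pair tm tm
  | Fst tm
  | Snd tm
  | App tm tm
  | If tm tm tm
  | Letrec var var tm tm   (* letrec f = \<lambda>x. M in N *)
  | Let var tm tm
  | Assert tm
  | Box tm

inductive wt :: "tm \<Rightarrow> ty \<Rightarrow> bool" where
  wt_meth: "wt (MethT m) (TArrow (argty m) (resty m))"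
| wt_int: "wt (IntT i) TInt"
| wt_unit: "wt UnitT TUnit"
| wt_var: "wt (VarT x) (varty x)"
| wt_lam: "wt M b \<Longrightarrow> wt (Lam x M) (TArrow (varty x) b)"
| wt_assign: "\<not> is_prod (refty r) \<Longrightarrow> wt M (refty r) \<Longrightarrow> wt (Assign r M) TUnit"
| wt_deref: "\<not> is_prod (refty r) \<Longrightarrow> wt (Deref r) (refty r)"
| wt_op: "wt M TInt \<Longrightarrow> wt N TInt \<Longrightarrow> wt (BinOp op M N) TInt"
| wt_pair: "wt M a \<Longrightarrow> wt N b \<Longrightarrow> wt (Pair M N) (TProd a b)"
| wt_fst: "wt M (TProd a b) \<Longrightarrow> wt (Fst M) a"
| wt_snd: "wt M (TProd a b) \<Longrightarrow> wt (Snd M) b"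
| wt_app: "wt M (TArrow a b) \<Longrightarrow> wt N a \<Longrightarrow> wt (App M N) b"
| wt_if: "wt M TInt \<Longrightarrow> wt N1 t \<Longrightarrow> wt N0 t \<Longrightarrow> wt (If M N1 N0) t"
| wt_letrec: "varty f = TArrow (varty x) b \<Longrightarrow> wt M b \<Longrightarrow> wt N c \<Longrightarrow> wt (Letrec f x M N) c"
| wt_let: "wt M (varty x) \<Longrightarrow> wt N c \<Longrightarrow> wt (Let x M N) c"
| wt_assert: "wt M TInt \<Longrightarrow> wt (Assert M) TUnit"
| wt_box: "wt M t \<Longrightarrow> wt (Box M) t"

fun fv :: "tm \<Rightarrow> var set" where
  "fv (MethT m) = {}"
| "fv (IntT i) = {}"
| "fv UnitT = {}"
| "fv (VarT x) = {x}"
| "fv (Lam x M) = fv M - {x}"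
| "fv (Assign r M) = fv M"
| "fv (Deref r) = {}"
| "fv (BinOp op M N) = fv M \<union> fv N"
| "fv (Pair M N) = fv M \<union> fv N"
| "fv (Fst M) = fv M"
| "fv (Snd M) = fv M"
| "fv (App M N) = fv M \<union> fv N"
| "fv (If M N1 N0) = fv M \<union> fv N1 \<union> fv N0"
| "fv (Letrec f x M N) = (fv M - {f, x}) \<union> (fv N - {f})"
| "fv (Let x M N) = fv M \<union> (fv N - {x})"
| "fv (Assert M) = fv M"
| "fv (Box M) = fv M"

fun meths :: "tm \<Rightarrow> meth set" where
  "meths (MethT m) = {m}"
| "meths (IntT i) = {}"
| "meths UnitT = {}"
| "meths (VarT x) = {}"
| "meths (Lam x M) = meths M"
| "meths (Assign r M) = meths M"
| "meths (Deref r) = {}"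
| "meths (BinOp op M N) = meths M \<union> meths N"
| "meths (Pair M N) = meths M \<union> meths N"
| "meths (Fst M) = meths M"
| "meths (Snd M) = meths M"
| "meths (App M N) = meths M \<union> meths N"
| "meths (If M N1 N0) = meths M \<union> meths N1 \<union> meths N0"
| "meths (Letrec f x M N) = meths M \<union> meths N"
| "meths (Let x M N) = meths M \<union> meths N"
| "meths (Assert M) = meths M"
| "meths (Box M) = meths M"

fun refs :: "tm \<Rightarrow> ref set" where
  "refs (MethT m) = {}"
| "refs (IntT i) = {}"
| "refs UnitT = {}"
| "refs (VarT x) = {}"
| "refs (Lam x M) = refs M"
| "refs (Assign r M) = insert r (refs M)"
| "refs (Deref r) = {r}"
| "refs (BinOp op M N) = refs M \<union> refs N"
| "refs (Pair M N) = refs M \<union> refs N"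
| "refs (Fst M) = refs M"
| "refs (Snd M) = refs M"
| "refs (App M N) = refs M \<union> refs N"
| "refs (If M N1 N0) = refs M \<union> refs N1 \<union> refs N0"
| "refs (Letrec f x M N) = refs M \<union> refs N"
| "refs (Let x M N) = refs M \<union> refs N"
| "refs (Assert M) = refs M"
| "refs (Box M) = refs M"

fun has_assert :: "tm \<Rightarrow> bool" where
  "has_assert (Lam x M) = has_assert M"
| "has_assert (Assign r M) = has_assert M"
| "has_assert (BinOp op M N) = (has_assert M \<or> has_assert N)"
| "has_assert (Pair M N) = (has_assert M \<or> has_assert N)"
| "has_assert (Fst M) = has_assert M"
| "has_assert (Snd M) = has_assert M"
| "has_assert (App M N) = (has_assert M \<or> has_assert N)"
| "has_assert (If M N1 N0) = (has_assert M \<or> has_assert N1 \<or> has_assert N0)"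
| "has_assert (Letrec f x M N) = (has_assert M \<or> has_assert N)"
| "has_assert (Let x M N) = (has_assert M \<or> has_assert N)"
| "has_assert (Assert M) = True"
| "has_assert (Box M) = has_assert M"
| "has_assert _ = False"

fun has_box :: "tm \<Rightarrow> bool" where
  "has_box (Lam x M) = has_box M"
| "has_box (Assign r M) = has_box M"
| "has_box (BinOp op M N) = (has_box M \<or> has_box N)"
| "has_box (Pair M N) = (has_box M \<or> has_box N)"
| "has_box (Fst M) = has_box M"
| "has_box (Snd M) = has_box M"
| "has_box (App M N) = (has_box M \<or> has_box N)"
| "has_box (If M N1 N0) = (has_box M \<or> has_box N1 \<or> has_box N0)"
| "has_box (Letrec f x M N) = (has_box M \<or> has_box N)"
| "has_box (Let x M N) = (has_box M \<or> has_box N)"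
| "has_box (Assert M) = has_box M"
| "has_box (Box M) = True"
| "has_box _ = False"

text \<open>Substitution of a (closed) value for a variable; values are closed, so no capture
  can occur.\<close>
fun subst :: "var \<Rightarrow> tm \<Rightarrow> tm \<Rightarrow> tm" where
  "subst x v (MethT m) = MethT m"
| "subst x v (IntT i) = IntT i"
| "subst x v UnitT = UnitT"
| "subst x v (VarT y) = (if y = x then v else VarT y)"
| "subst x v (Lam y M) = (if y = x then Lam y M else Lam y (subst x v M))"
| "subst x v (Assign r M) = Assign r (subst x v M)"
| "subst x v (Deref r) = Deref r"
| "subst x v (BinOp op M N) = BinOp op (subst x v M) (subst x v N)"
| "subst x v (Pair M N) = Pair (subst x v M) (subst x v N)"
| "subst x v (Fst M) = Fst (subst x v M)"
| "subst x v (Snd M) = Snd (subst x v M)"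
| "subst x v (App M N) = App (subst x v M) (subst x v N)"
| "subst x v (If M N1 N0) = If (subst x v M) (subst x v N1) (subst x v N0)"
| "subst x v (Letrec f y M N) =
     Letrec f y (if x = f \<or> x = y then M else subst x v M) (if x = f then N else subst x v N)"
| "subst x v (Let y M N) = Let y (subst x v M) (if x = y then N else subst x v N)"
| "subst x v (Assert M) = Assert (subst x v M)"
| "subst x v (Box M) = Box (subst x v M)"

fun is_val :: "tm \<Rightarrow> bool" where
  "is_val (MethT m) = True"
| "is_val (IntT i) = True"
| "is_val UnitT = True"
| "is_val (Pair v w) = (is_val v \<and> is_val w)"
| "is_val _ = False"

section \<open>Evaluation contexts and reduction\<close>

datatype ectx =
    Hole
  | EAssert ectx
  | EAssign ref ectx
  | EOpL binop ectx tm
  | EOpR binop tm ectx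
  | EPairL ectx tm
  | EPairR tm ectx
  | EFst ectx
  | ESnd ectx
  | EApp meth ectx
  | ELet var ectx tm
  | EIf ectx tm tm
  | EBox ectx

fun fill :: "ectx \<Rightarrow> tm \<Rightarrow> tm" where
  "fill Hole t = t"
| "fill (EAssert E) t = Assert (fill E t)"
| "fill (EAssign r E) t = Assign r (fill E t)"
| "fill (EOpL op E N) t = BinOp op (fill E t) N"
| "fill (EOpR op v E) t = BinOp op v (fill E t)"
| "fill (EPairL E N) t = Pair (fill E t) N"
| "fill (EPairR v E) t = Pair v (fill E t)"
| "fill (EFst E) t = Fst (fill E t)"
| "fill (ESnd E) t = Snd (fill E t)"
| "fill (EApp m E) t = App (MethT m) (fill E t)"
| "fill (ELet x E N) t = Let x (fill E t) N"
| "fill (EIf E N1 N0) t = If (fill E t) N1 N0"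
| "fill (EBox E) t = Box (fill E t)"

fun ectx_ok :: "ectx \<Rightarrow> bool" where
  "ectx_ok Hole = True"
| "ectx_ok (EAssert E) = ectx_ok E"
| "ectx_ok (EAssign r E) = ectx_ok E"
| "ectx_ok (EOpL op E N) = ectx_ok E"
| "ectx_ok (EOpR op v E) = (is_val v \<and> ectx_ok E)"
| "ectx_ok (EPairL E N) = ectx_ok E"
| "ectx_ok (EPairR v E) = (is_val v \<and> ectx_ok E)"
| "ectx_ok (EFst E) = ectx_ok E"
| "ectx_ok (ESnd E) = ectx_ok E"
| "ectx_ok (EApp m E) = ectx_ok E"
| "ectx_ok (ELet x E N) = ectx_ok E"
| "ectx_ok (EIf E N1 N0) = ectx_ok E"
| "ectx_ok (EBox E) = ectx_ok E"

type_synonym repo = "meth \<rightharpoonup> var \<times> tm"   (* m \<mapsto> \<lambda>x.M is stored as (x, M) *)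
type_synonym store = "ref \<rightharpoonup> tm"

text \<open>Redex contraction.  The set \<open>X\<close> collects the names that a freshly generated method
  name must avoid in addition to \<open>dom R\<close>.\<close>
inductive head :: "meth set \<Rightarrow> tm \<times> repo \<times> store \<times> nat \<Rightarrow> tm \<times> repo \<times> store \<times> nat \<Rightarrow> bool" where
  h_let: "is_val v \<Longrightarrow> head X (Let x v M, R, S, k) (subst x v M, R, S, k)"
| h_fst: "is_val v1 \<Longrightarrow> is_val v2 \<Longrightarrow> head X (Fst (Pair v1 v2), R, S, k) (v1, R, S, k)"
| h_snd: "is_val v1 \<Longrightarrow> is_val v2 \<Longrightarrow> head X (Snd (Pair v1 v2), R, S, k) (v2, R, S, k)"
| h_assign: "is_val v \<Longrightarrow> head X (Assign r v, R, S, k) (UnitT, R, S(r \<mapsto> v), k)"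
| h_deref: "S r = Some v \<Longrightarrow> head X (Deref r, R, S, k) (v, R, S, k)"
| h_if1: "i \<noteq> 0 \<Longrightarrow> head X (If (IntT i) M1 M0, R, S, k) (M1, R, S, k)"
| h_if0: "head X (If (IntT 0) M1 M0, R, S, k) (M0, R, S, k)"
| h_op: "head X (BinOp op (IntT i1) (IntT i2), R, S, k) (IntT (opsem op i1 i2), R, S, k)"
| h_lam: "wt (Lam x M) (TArrow (argty m) (resty m)) \<Longrightarrow> m \<notin> dom R \<Longrightarrow> m \<notin> X \<Longrightarrow>
          head X (Lam x M, R, S, k) (MethT m, R(m \<mapsto> (x, M)), S, k)"
| h_assert: "i \<noteq> 0 \<Longrightarrow> head X (Assert (IntT i), R, S, k) (UnitT, R, S, k)"
| h_call: "R m = Some (x, M) \<Longrightarrow> is_val v \<Longrightarrow>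
          head X (App (MethT m) v, R, S, k) (Box (subst x v M), R, S, Suc k)"
| h_box: "is_val v \<Longrightarrow> head X (Box v, R, S, Suc k) (v, R, S, k)"
| h_letrec: "varty f = TArrow (argty m) (resty m) \<Longrightarrow> m \<notin> dom R \<Longrightarrow> m \<notin> X \<Longrightarrow>
          head X (Letrec f x M N, R, S, k)
             (subst f (MethT m) N, R(m \<mapsto> (x, if x = f then M else subst f (MethT m) M)), S, k)"

inductive red :: "meth set \<Rightarrow> tm \<times> repo \<times> store \<times> nat \<Rightarrow> tm \<times> repo \<times> store \<times> nat \<Rightarrow> bool" where
  red_ctx: "ectx_ok E \<Longrightarrow> head X (M, R, S, k) (M', R', S', k') \<Longrightarrow>
            red X (fill E M, R, S, k) (fill E M', R', S', k')"

section \<open>Trace semantics\<close>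

datatype frame = FCtx meth ectx | FNum meth nat

fun frame_meths :: "frame \<Rightarrow> meth set" where
  "frame_meths (FCtx m E) = insert m (meths (fill E UnitT))"
| "frame_meths (FNum m l) = {m}"

text \<open>P-configurations \<open>PC stack M R S Pub Abs k\<close> and O-configurations \<open>OC stack l R S Pub Abs k\<close>.\<close>
datatype config =
    PC "frame list" tm repo store "meth set" "meth set" nat
  | OC "frame list" nat repo store "meth set" "meth set" nat

datatype move = Call meth tm | Ret meth tm

text \<open>Names a freshly created method name must avoid in a P-configuration (besides dom R).\<close>
definition used_names :: "frame list \<Rightarrow> tm \<Rightarrow> repo \<Rightarrow> store \<Rightarrow> meth set \<Rightarrow> meth set \<Rightarrow> meth set" where
  "used_names Es M R S P A =
     A \<union> P \<union> meths M \<union> \<Union> (meths ` ran S) \<union> \<Union> ((\<lambda>(x, N). meths N) ` ran R)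
       \<union> \<Union> (frame_meths ` set Es)"

text \<open>Opponent values: any value of the expected type; names in it that are already in the
  repository must be public (the opponent cannot know private names).\<close>
definition o_val :: "repo \<Rightarrow> meth set \<Rightarrow> tm \<Rightarrow> ty \<Rightarrow> bool" where
  "o_val R P v t \<longleftrightarrow> is_val v \<and> wt v t \<and> meths v \<inter> dom R \<subseteq> P"

inductive cstep :: "config \<Rightarrow> move option \<Rightarrow> config \<Rightarrow> bool" where
  c_int: "red (used_names Es M R S P A) (M, R, S, k) (M', R', S', k') \<Longrightarrow>
          cstep (PC Es M R S P A k) None (PC Es M' R' S' P A k')"
| c_pq: "ectx_ok E \<Longrightarrow> is_val v \<Longrightarrow> m \<in> A \<Longrightarrow>
          cstep (PC Es (fill E (App (MethT m) v)) R S P A k) (Some (Call m v))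
                (OC (FCtx m E # Es) 0 R S (P \<union> (meths v \<inter> dom R)) A k)"
| c_oq: "m \<in> P \<Longrightarrow> R m \<noteq> None \<Longrightarrow> o_val R P v (argty m) \<Longrightarrow>
          cstep (OC Es l R S P A k) (Some (Call m v))
                (PC (FNum m (l + 1) # Es) (App (MethT m) v) R S P (A \<union> (meths v - dom R)) k)"
| c_pa: "is_val v \<Longrightarrow>
          cstep (PC (FNum m l # Es) v R S P A k) (Some (Ret m v))
                (OC Es l R S (P \<union> (meths v \<inter> dom R)) A k)"
| c_oa: "o_val R P v (resty m) \<Longrightarrow>
          cstep (OC (FCtx m E # Es) l R S P A k) (Some (Ret m v))
                (PC Es (fill E v) R S P (A \<union> (meths v - dom R)) k)"

inductive ctrace :: "config \<Rightarrow> move list \<Rightarrow> config \<Rightarrow> bool" where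
  ct_refl: "ctrace c [] c"
| ct_int: "cstep c None c' \<Longrightarrow> ctrace c' t c'' \<Longrightarrow> ctrace c t c''"
| ct_mv: "cstep c (Some a) c' \<Longrightarrow> ctrace c' t c'' \<Longrightarrow> ctrace c (a # t) c''"

section \<open>Libraries and clients\<close>

datatype decl =
    Abstract meth
  | PublicM meth var tm
  | PrivM meth var tm
  | RefInt ref int
  | RefLam ref var tm

type_synonym library = "decl list"
type_synonym client = "decl list \<times> tm"   (* L; main = M *)

fun is_abstract :: "decl \<Rightarrow> bool" where
  "is_abstract (Abstract m) = True"
| "is_abstract _ = False"

fun decl_terms :: "decl \<Rightarrow> tm list" where
  "decl_terms (Abstract m) = []"
| "decl_terms (PublicM m x M) = [Lam x M]"
| "decl_terms (PrivM m x M) = [Lam x M]"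
| "decl_terms (RefInt r i) = []"
| "decl_terms (RefLam r x M) = [Lam x M]"

fun decl_meth :: "decl \<Rightarrow> meth list" where
  "decl_meth (PublicM m x M) = [m]"
| "decl_meth (PrivM m x M) = [m]"
| "decl_meth _ = []"

fun decl_pub :: "decl \<Rightarrow> meth list" where
  "decl_pub (PublicM m x M) = [m]"
| "decl_pub _ = []"

fun decl_abs :: "decl \<Rightarrow> meth list" where
  "decl_abs (Abstract m) = [m]"
| "decl_abs _ = []"

fun decl_ref :: "decl \<Rightarrow> ref list" where
  "decl_ref (RefInt r i) = [r]"
| "decl_ref (RefLam r x M) = [r]"
| "decl_ref _ = []"

fun decl_typed :: "decl \<Rightarrow> bool" where
  "decl_typed (Abstract m) = True"
| "decl_typed (PublicM m x M) = wt (Lam x M) (TArrow (argty m) (resty m))"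
| "decl_typed (PrivM m x M) = wt (Lam x M) (TArrow (argty m) (resty m))"
| "decl_typed (RefInt r i) = (refty r = TInt)"
| "decl_typed (RefLam r x M) = wt (Lam x M) (refty r)"

definition lib_terms :: "decl list \<Rightarrow> tm list" where
  "lib_terms L = concat (map decl_terms L)"

definition defined_meths :: "decl list \<Rightarrow> meth list" where
  "defined_meths L = concat (map decl_meth L)"

definition abstract_meths :: "decl list \<Rightarrow> meth list" where
  "abstract_meths L = concat (map decl_abs L)"

definition defined_refs :: "decl list \<Rightarrow> ref list" where
  "defined_refs L = concat (map decl_ref L)"

text \<open>Source terms: typed (via \<open>decl_typed\<close>), closed, free of runtime evaluation boxes.\<close>
definition source_term :: "tm \<Rightarrow> bool" where
  "source_term M \<longleftrightarrow> fv M = {} \<and> \<not> has_box M"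

definition wf_library :: "library \<Rightarrow> bool" where
  "wf_library L \<longleftrightarrow>
     (\<exists>ms B. L = map Abstract ms @ B \<and> (\<forall>d \<in> set B. \<not> is_abstract d))
   \<and> distinct (defined_meths L)
   \<and> distinct (defined_refs L)
   \<and> set (abstract_meths L) \<inter> set (defined_meths L) = {}
   \<and> (\<forall>d \<in> set L. decl_typed d)
   \<and> (\<forall>r \<in> set (defined_refs L). \<not> is_prod (refty r))
   \<and> (\<forall>M \<in> set (lib_terms L). source_term M
          \<and> meths M \<subseteq> set (defined_meths L) \<union> set (abstract_meths L)
          \<and> refs M \<subseteq> set (defined_refs L))"

fun wf_client :: "client \<Rightarrow> bool" where
  "wf_client (L, M) \<longleftrightarrow> wf_library L \<and> wt M TUnit \<and> source_term M
     \<and> meths M \<subseteq> set (defined_meths L) \<union> set (abstract_meths L)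
     \<and> refs M \<subseteq> set (defined_refs L)"

fun good_client :: "client \<Rightarrow> bool" where
  "good_client (L, M) \<longleftrightarrow> \<not> has_assert M \<and> (\<forall>N \<in> set (lib_terms L). \<not> has_assert N)"

text \<open>Building.  \<open>N\<close> is the set of names mentioned in the program; fresh names avoid it.\<close>
inductive builds :: "meth set \<Rightarrow> decl list \<Rightarrow> repo \<Rightarrow> store \<Rightarrow> meth set \<Rightarrow> meth set
                       \<Rightarrow> repo \<times> store \<times> meth set \<times> meth set \<Rightarrow> bool" where
  b_nil: "builds N [] R S P A (R, S, P, A)"
| b_abs: "builds N ds R S P (insert m A) res \<Longrightarrow> builds N (Abstract m # ds) R S P A res"
| b_pub: "builds N ds (R(m \<mapsto> (x, M))) S (insert m P) A res \<Longrightarrow>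
          builds N (PublicM m x M # ds) R S P A res"
| b_priv: "builds N ds (R(m \<mapsto> (x, M))) S P A res \<Longrightarrow>
          builds N (PrivM m x M # ds) R S P A res"
| b_refint: "builds N ds R (S(r \<mapsto> IntT i)) P A res \<Longrightarrow>
          builds N (RefInt r i # ds) R S P A res"
| b_reflam: "m \<notin> dom R \<Longrightarrow> m \<notin> N \<Longrightarrow> refty r = TArrow (argty m) (resty m) \<Longrightarrow>
          builds N ds (R(m \<mapsto> (x, M))) (S(r \<mapsto> MethT m)) P A res \<Longrightarrow>
          builds N (RefLam r x M # ds) R S P A res"

definition prog_names :: "decl list \<Rightarrow> meth set" where
  "prog_names L = set (defined_meths L) \<union> set (abstract_meths L) \<union> \<Union> (meths ` set (lib_terms L))"

definition lib_builds :: "library \<Rightarrow> repo \<Rightarrow> store \<Rightarrow> meth set \<Rightarrow> meth set \<Rightarrow> bool" where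
  "lib_builds L R S P A \<longleftrightarrow> builds (prog_names L) L Map.empty Map.empty {} {} (R, S, P, A)"

fun client_builds :: "client \<Rightarrow> tm \<Rightarrow> repo \<Rightarrow> store \<Rightarrow> meth set \<Rightarrow> meth set \<Rightarrow> bool" where
  "client_builds (L, M) M' R S P A \<longleftrightarrow> M' = M \<and>
     builds (prog_names L \<union> meths M) L Map.empty Map.empty {} {} (R, S, P, A)"

definition sem_lib :: "library \<Rightarrow> (move list \<times> config) set" where
  "sem_lib L = {(\<tau>, \<rho>). \<exists>R S P A. lib_builds L R S P A \<and> ctrace (OC [] 0 R S P A 0) \<tau> \<rho>}"

definition sem_client :: "client \<Rightarrow> (move list \<times> config) set" where
  "sem_client C = {(\<tau>, \<rho>). \<exists>M R S P A. client_builds C M R S P A \<and> ctrace (PC [] M R S P A 0) \<tau> \<rho>}"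

definition compatible :: "library \<Rightarrow> client \<Rightarrow> bool" where
  "compatible L C \<longleftrightarrow> (\<exists>R S P A M R' S' P' A'.
     lib_builds L R S P A \<and> client_builds C M R' S' P' A' \<and>
     P = A' \<and> A = P' \<and> dom S \<inter> dom S' = {} \<and> dom R \<inter> dom R' = {})"

end

theory Submission
  imports Defs
begin


fun ecomp :: "ectx \<Rightarrow> ectx \<Rightarrow> ectx" where
  "ecomp Hole E' = E'"
| "ecomp (EAssert E) E' = EAssert (ecomp E E')"
| "ecomp (EAssign r E) E' = EAssign r (ecomp E E')"
| "ecomp (EOpL op E N) E' = EOpL op (ecomp E E') N"
| "ecomp (EOpR op v E) E' = EOpR op v (ecomp E E')"
| "ecomp (EPairL E N) E' = EPairL (ecomp E E') N"
| "ecomp (EPairR v E) E' = EPairR v (ecomp E E')"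
| "ecomp (EFst E) E' = EFst (ecomp E E')"
| "ecomp (ESnd E) E' = ESnd (ecomp E E')"
| "ecomp (EApp m E) E' = EApp m (ecomp E E')"
| "ecomp (ELet x E N) E' = ELet x (ecomp E E') N"
| "ecomp (EIf E N1 N0) E' = EIf (ecomp E E') N1 N0"
| "ecomp (EBox E) E' = EBox (ecomp E E')"

lemma fill_ecomp[simp]: "fill (ecomp E E') t = fill E (fill E' t)"
  by (induct E) auto

lemma ectx_ok_ecomp[simp]: "ectx_ok (ecomp E E') = (ectx_ok E \<and> ectx_ok E')"
  by (induct E) auto

lemma ecomp_Hole[simp]: "ecomp E Hole = E"
  by (induct E) auto

lemma ecomp_assoc: "ecomp (ecomp E1 E2) E3 = ecomp E1 (ecomp E2 E3)"
  by (induct E1) auto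

inductive_cases wtE_meth[elim!]: "wt (MethT m) t"
inductive_cases wtE_int[elim!]: "wt (IntT i) t"
inductive_cases wtE_unit[elim!]: "wt UnitT t"
inductive_cases wtE_var[elim!]: "wt (VarT x) t"
inductive_cases wtE_lam[elim!]: "wt (Lam x M) t"
inductive_cases wtE_assign[elim!]: "wt (Assign r M) t"
inductive_cases wtE_deref[elim!]: "wt (Deref r) t"
inductive_cases wtE_op[elim!]: "wt (BinOp op M N) t"
inductive_cases wtE_pair[elim!]: "wt (Pair M N) t"
inductive_cases wtE_fst[elim!]: "wt (Fst M) t"
inductive_cases wtE_snd[elim!]: "wt (Snd M) t"
inductive_cases wtE_app[elim!]: "wt (App M N) t"
inductive_cases wtE_if[elim!]: "wt (If M N1 N0) t"
inductive_cases wtE_letrec[elim!]: "wt (Letrec f x M N) t"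
inductive_cases wtE_let[elim!]: "wt (Let x M N) t"
inductive_cases wtE_assert[elim!]: "wt (Assert M) t"
inductive_cases wtE_box[elim!]: "wt (Box M) t"

lemma wt_unique: "wt M t1 \<Longrightarrow> wt M t2 \<Longrightarrow> t1 = t2"
proof (induct arbitrary: t2 rule: wt.induct)
qed (blast+)

lemma wt_subst: "wt M t \<Longrightarrow> wt v (varty x) \<Longrightarrow> wt (subst x v M) t"
  by (induct rule: wt.induct) (auto intro: wt.intros)

lemma wt_fill: "wt (fill E M) t \<Longrightarrow> \<exists>t0. wt M t0 \<and> (\<forall>N. wt N t0 \<longrightarrow> wt (fill E N) t)"
proof (induct E arbitrary: t)
  case Hole then show ?case by auto
next
  case (EAssert E) then show ?case by (fastforce intro: wt.intros)
next
  case (EAssign r E) then show ?case by (fastforce intro: wt.intros)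
next
  case (EOpL op E N) then show ?case by (fastforce intro: wt.intros)
next
  case (EOpR op v E) then show ?case by (fastforce intro: wt.intros)
next
  case (EPairL E N) then show ?case by (fastforce intro: wt.intros)
next
  case (EPairR v E) then show ?case by (fastforce intro: wt.intros)
next
  case (EFst E) then show ?case by (fastforce intro: wt.intros)
next
  case (ESnd E) then show ?case by (fastforce intro: wt.intros)
next
  case (EApp m E) then show ?case by (fastforce intro: wt.intros)
next
  case (ELet x E N) then show ?case by (fastforce intro: wt.intros)
next
  case (EIf E N1 N0) then show ?case by (fastforce intro: wt.intros)
next
  case (EBox E) then show ?case by (fastforce intro: wt.intros)
qed

lemma ty_not_arrow_self: "t \<noteq> TArrow t b"
  by (induct t arbitrary: b) auto

definition Rty :: "repo \<Rightarrow> bool" where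
  "Rty R \<longleftrightarrow> (\<forall>m x M. R m = Some (x, M) \<longrightarrow> varty x = argty m \<and> wt M (resty m))"

definition Sty :: "store \<Rightarrow> bool" where
  "Sty S \<longleftrightarrow> (\<forall>r v. S r = Some v \<longrightarrow> wt v (refty r))"

lemma wt_meth_ty: "wt (MethT m) t \<longleftrightarrow> t = TArrow (argty m) (resty m)"
  by (auto intro: wt.intros)

lemma head_wt:
  assumes "head X (M, R, S, k) (M', R', S', k')" "wt M t" "Rty R" "Sty S"
  shows "wt M' t \<and> Rty R' \<and> Sty S'"
  using assms
proof (cases rule: head.cases)
  case (h_letrec f m x N N')
  have nx: "x \<noteq> f"
  proof
    assume "x = f"
    with h_letrec assms(2) show False using ty_not_arrow_self[of "varty x"] by auto
  qed
  then show ?thesis using h_letrec assms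
    by (auto simp: Rty_def intro!: wt_subst intro: wt.intros)
qed (auto simp: Rty_def Sty_def wt_meth_ty dest: wt_unique intro!: wt_subst intro: wt.intros)

lemma red_cases:
  assumes "red X (M, R, S, k) (M', R', S', k')"
  shows "\<exists>E M0 M0'. ectx_ok E \<and> M = fill E M0 \<and> M' = fill E M0' \<and> head X (M0, R, S, k) (M0', R', S', k')"
  using assms by (cases rule: red.cases) auto

lemma red_wt:
  assumes "red X (M, R, S, k) (M', R', S', k')" "wt M t" "Rty R" "Sty S"
  shows "wt M' t \<and> Rty R' \<and> Sty S'"
proof -
  obtain E M0 M0' where e: "ectx_ok E" "M = fill E M0" "M' = fill E M0'"
      "head X (M0, R, S, k) (M0', R', S', k')"
    using red_cases[OF assms(1)] by blast
  obtain t0 where t0: "wt M0 t0" "\<forall>N. wt N t0 \<longrightarrow> wt (fill E N) t"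
    using wt_fill assms(2) e(2) by blast
  show ?thesis using head_wt[OF e(4) t0(1) assms(3,4)] t0(2) e(3) by auto
qed


definition rnames :: "repo \<Rightarrow> meth set" where
  "rnames R = \<Union>((\<lambda>(x, N). meths N) ` ran R)"
definition snames :: "store \<Rightarrow> meth set" where
  "snames S = \<Union>(meths ` ran S)"

lemma ran_upd_sub: "ran (f(a \<mapsto> b)) \<subseteq> insert b (ran f)"
  by (auto simp: ran_def)

lemma rnames_upd: "rnames (R(m \<mapsto> (x, M))) \<subseteq> rnames R \<union> meths M"
  using ran_upd_sub[of R m "(x, M)"] unfolding rnames_def by blast

lemma snames_upd: "snames (S(r \<mapsto> v)) \<subseteq> snames S \<union> meths v"
  using ran_upd_sub[of S r v] unfolding snames_def by blast

lemma rnames_get: "R m = Some (x, M) \<Longrightarrow> meths M \<subseteq> rnames R"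
  unfolding rnames_def ran_def by force

lemma snames_get: "S r = Some v \<Longrightarrow> meths v \<subseteq> snames S"
  unfolding snames_def ran_def by force

lemma meths_subst: "meths (subst x v M) \<subseteq> meths M \<union> meths v"
  by (induct M) auto

lemma meths_fill: "meths (fill E M) = meths (fill E UnitT) \<union> meths M"
  by (induct E) auto

lemma head_names:
  assumes "head X (M, R, S, k) (M', R', S', k')"
  shows "meths M' \<union> rnames R' \<union> snames S' \<subseteq> meths M \<union> rnames R \<union> snames S \<union> (dom R' - dom R)
     \<and> dom R \<subseteq> dom R' \<and> (dom R' - dom R) \<inter> X = {}"
  using assms
proof cases
  case (h_letrec f m x N N')
  have a: "meths (subst f (MethT m) N') \<subseteq> meths N' \<union> {m}"
    using meths_subst[of f "MethT m" N'] by simp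
  have b: "meths (if x = f then N else subst f (MethT m) N) \<subseteq> meths N \<union> {m}"
    using meths_subst[of f "MethT m" N] by auto
  have c: "rnames R' \<subseteq> rnames R \<union> meths N \<union> {m}"
    using rnames_upd[of R m x "if x = f then N else subst f (MethT m) N"] b h_letrec by auto
  show ?thesis using a c h_letrec by auto
next
  case (h_let v x N)
  then show ?thesis using meths_subst[of x v N] by auto
next
  case (h_assign v r)
  then show ?thesis using snames_upd[of S r v] by auto
next
  case (h_deref r)
  then show ?thesis using snames_get[of S r M'] by auto
next
  case (h_lam x N m)
  then show ?thesis using rnames_upd[of R m x N] by auto
next
  case (h_call m x N v)
  then show ?thesis using rnames_get[of R m x N] meths_subst[of x v N] by auto
qed auto

lemma red_names:
  assumes "red X (M, R, S, k) (M', R', S', k')"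
  shows "meths M' \<union> rnames R' \<union> snames S' \<subseteq> meths M \<union> rnames R \<union> snames S \<union> (dom R' - dom R)
     \<and> dom R \<subseteq> dom R' \<and> (dom R' - dom R) \<inter> X = {}"
proof -
  obtain E M0 M0' where e: "ectx_ok E" "M = fill E M0" "M' = fill E M0'"
      "head X (M0, R, S, k) (M0', R', S', k')"
    using red_cases[OF assms(1)] by blast
  show ?thesis using head_names[OF e(4)] e(2,3) meths_fill[of E M0] meths_fill[of E M0'] by auto
qed

fun stk_acc :: "(nat \<times> meth) list \<Rightarrow> nat \<Rightarrow> move list \<Rightarrow> (nat \<times> meth) list" where
  "stk_acc acc n [] = acc"
| "stk_acc acc n (Call m v # t) = stk_acc ((n, m) # acc) (Suc n) t"
| "stk_acc acc n (Ret m v # t) = stk_acc (tl acc) (Suc n) t"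

definition stk :: "move list \<Rightarrow> (nat \<times> meth) list" where
  "stk t = stk_acc [] 0 t"

lemma stk_acc_snoc:
  "stk_acc acc n (t @ [a]) = (case a of Call m v \<Rightarrow> (n + length t, m) # stk_acc acc n t
                                     | Ret m v \<Rightarrow> tl (stk_acc acc n t))"
proof (induct t arbitrary: acc n)
  case Nil then show ?case by (cases a) auto
next
  case (Cons b t) then show ?case by (cases b) (auto split: move.splits)
qed

lemma stk_Nil[simp]: "stk [] = []" by (simp add: stk_def)
lemma stk_snoc_Call[simp]: "stk (t @ [Call m v]) = (length t, m) # stk t"
  by (simp add: stk_def stk_acc_snoc)
lemma stk_snoc_Ret[simp]: "stk (t @ [Ret m v]) = tl (stk t)"
  by (simp add: stk_def stk_acc_snoc)

fun mval :: "move \<Rightarrow> tm" where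
  "mval (Call m v) = v"
| "mval (Ret m v) = v"

definition vnP :: "move list \<Rightarrow> meth set" where
  "vnP t = (\<Union>i\<in>{i. i < length t \<and> odd i}. meths (mval (t ! i)))"
definition vnO :: "move list \<Rightarrow> meth set" where
  "vnO t = (\<Union>i\<in>{i. i < length t \<and> even i}. meths (mval (t ! i)))"

lemma vnP_snoc: "vnP (t @ [a]) = vnP t \<union> (if odd (length t) then meths (mval a) else {})"
proof -
  have s: "{i. i < length (t @ [a]) \<and> odd i} = {i. i < length t \<and> odd i} \<union> (if odd (length t) then {length t} else {})"
    by (auto simp: less_Suc_eq)
  have c: "(\<Union>i\<in>{i. i < length t \<and> odd i}. meths (mval ((t @ [a]) ! i))) = (\<Union>i\<in>{i. i < length t \<and> odd i}. meths (mval (t ! i)))"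
    by (rule SUP_cong) (auto simp: nth_append)
  show ?thesis unfolding vnP_def s using c by auto
qed

lemma vnO_snoc: "vnO (t @ [a]) = vnO t \<union> (if even (length t) then meths (mval a) else {})"
proof -
  have s: "{i. i < length (t @ [a]) \<and> even i} = {i. i < length t \<and> even i} \<union> (if even (length t) then {length t} else {})"
    by (auto simp: less_Suc_eq)
  have c: "(\<Union>i\<in>{i. i < length t \<and> even i}. meths (mval ((t @ [a]) ! i))) = (\<Union>i\<in>{i. i < length t \<and> even i}. meths (mval (t ! i)))"
    by (rule SUP_cong) (auto simp: nth_append)
  show ?thesis unfolding vnO_def s using c by auto
qed

lemma vnP_Nil[simp]: "vnP [] = {}" by (simp add: vnP_def)
lemma vnO_Nil[simp]: "vnO [] = {}" by (simp add: vnO_def)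

fun srel :: "frame \<Rightarrow> nat \<times> meth \<Rightarrow> bool" where
  "srel (FNum m l) (j, m') = (even j \<and> m = m')"
| "srel (FCtx m E) (j, m') = (odd j \<and> m = m')"

fun fok :: "frame list \<Rightarrow> bool" and tok :: "ty \<Rightarrow> frame list \<Rightarrow> bool" where
  "fok [] = True"
| "fok (FCtx m E # Es) = (\<exists>t. (\<forall>v. wt v (resty m) \<longrightarrow> wt (fill E v) t) \<and> tok t Es)"
| "fok (FNum m l # Es) = False"
| "tok t [] = False"
| "tok t (FNum m l # Es) = (t = resty m \<and> fok Es)"
| "tok t (FCtx m E # Es) = False"

definition fnames :: "frame list \<Rightarrow> meth set" where
  "fnames Es = \<Union>(frame_meths ` set Es)"

definition COM :: "repo \<Rightarrow> meth set \<Rightarrow> meth set \<Rightarrow> move list \<Rightarrow> frame list \<Rightarrow> repo \<Rightarrow> store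
    \<Rightarrow> meth set \<Rightarrow> meth set \<Rightarrow> bool" where
  "COM R0 P0 A0 pre Es R S P A \<longleftrightarrow> list_all2 srel Es (stk pre) \<and> Rty R \<and> Sty S
     \<and> rnames R \<union> snames S \<union> fnames Es \<subseteq> dom R \<union> A \<and> dom R \<inter> A = {} \<and> P \<subseteq> dom R
     \<and> P \<subseteq> P0 \<union> vnP pre \<and> A \<subseteq> A0 \<union> vnO pre \<and> dom R0 \<subseteq> dom R \<and> A0 \<subseteq> A"

fun LI :: "repo \<Rightarrow> meth set \<Rightarrow> meth set \<Rightarrow> move list \<Rightarrow> config \<Rightarrow> bool" where
  "LI R0 P0 A0 pre (OC Es l R S P A k) = (even (length pre) \<and> fok Es \<and> COM R0 P0 A0 pre Es R S P A)"
| "LI R0 P0 A0 pre (PC Es M R S P A k) = (odd (length pre) \<and> (\<exists>t. wt M t \<and> tok t Es)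
      \<and> meths M \<subseteq> dom R \<union> A \<and> COM R0 P0 A0 pre Es R S P A)"

fun cdom :: "config \<Rightarrow> meth set" where
  "cdom (OC Es l R S P A k) = dom R"
| "cdom (PC Es M R S P A k) = dom R"

fun cA :: "config \<Rightarrow> meth set" where
  "cA (OC Es l R S P A k) = A"
| "cA (PC Es M R S P A k) = A"

definition MF :: "meth set \<Rightarrow> meth set \<Rightarrow> meth set \<Rightarrow> meth set \<Rightarrow> move list \<Rightarrow> nat \<Rightarrow> bool" where
  "MF P0 A0 D AF t n \<longleftrightarrow> (let pre = take n t in
     if even n then (case t ! n of
         Call f v \<Rightarrow> f \<in> P0 \<union> vnP pre \<and> f \<in> D \<and> is_val v \<and> wt v (argty f) \<and> meths v \<subseteq> AF \<union> P0 \<union> vnP pre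
       | Ret m v \<Rightarrow> (\<exists>j st. stk pre = (j, m) # st \<and> odd j) \<and> is_val v \<and> wt v (resty m)
                     \<and> meths v \<subseteq> AF \<union> P0 \<union> vnP pre)
     else (case t ! n of
         Call m v \<Rightarrow> m \<in> A0 \<union> vnO pre \<and> m \<in> AF \<and> is_val v \<and> wt v (argty m) \<and> meths v \<subseteq> D \<union> A0 \<union> vnO pre
       | Ret f v \<Rightarrow> (\<exists>j st. stk pre = (j, f) # st \<and> even j) \<and> is_val v \<and> wt v (resty f)
                     \<and> meths v \<subseteq> D \<union> A0 \<union> vnO pre))"

lemma MF_mono: "MF P0 A0 D AF t n \<Longrightarrow> D \<subseteq> D' \<Longrightarrow> AF \<subseteq> AF' \<Longrightarrow> MF P0 A0 D' AF' t n"
  unfolding MF_def Let_def by (cases "t ! n"; cases "even n"; simp; blast)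

lemma MF_append: "n < length t \<Longrightarrow> MF P0 A0 D AF (t @ u) n = MF P0 A0 D AF t n"
proof -
  assume a: "n < length t"
  have h1: "take n (t @ u) = take n t" using a by simp
  have h2: "(t @ u) ! n = t ! n" using a by (simp add: nth_append)
  show ?thesis unfolding MF_def by (simp only: h1 h2)
qed


lemma LI_int:
  assumes "LI R0 P0 A0 pre c" "cstep c None c'"
  shows "LI R0 P0 A0 pre c' \<and> cdom c \<subseteq> cdom c' \<and> cA c' = cA c"
  using assms(2)
proof cases
  case (c_int Es M R S P A k M' R' S' k')
  note red = c_int(3)
  from assms(1) c_int obtain t where t: "wt M t" "tok t Es" and mM: "meths M \<subseteq> dom R \<union> A"
    and com: "COM R0 P0 A0 pre Es R S P A" and od: "odd (length pre)" by auto
  have ty: "wt M' t \<and> Rty R' \<and> Sty S'" using red_wt[OF red t(1)] com by (auto simp: COM_def)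
  have nm: "meths M' \<union> rnames R' \<union> snames S' \<subseteq> meths M \<union> rnames R \<union> snames S \<union> (dom R' - dom R)
     \<and> dom R \<subseteq> dom R' \<and> (dom R' - dom R) \<inter> used_names Es M R S P A = {}"
    using red_names[OF red] .
  have Au: "A \<subseteq> used_names Es M R S P A" by (auto simp: used_names_def)
  have "COM R0 P0 A0 pre Es R' S' P A"
    using com nm ty Au mM unfolding COM_def by blast
  moreover have "meths M' \<subseteq> dom R' \<union> A"
  proof -
    have "rnames R \<union> snames S \<subseteq> dom R \<union> A" "dom R \<subseteq> dom R'" using com nm unfolding COM_def by auto
    then show ?thesis using nm mM by blast
  qed
  ultimately show ?thesis using c_int od t ty nm by auto
qed

lemma meths_fill_sub: "meths M \<subseteq> meths (fill E M)"
  using meths_fill[of E M] by auto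

lemma LI_mv:
  assumes "LI R0 P0 A0 pre c" "cstep c (Some a) c'"
  shows "LI R0 P0 A0 (pre @ [a]) c' \<and> cdom c \<subseteq> cdom c' \<and> cA c \<subseteq> cA c'
     \<and> MF P0 A0 (cdom c') (cA c') (pre @ [a]) (length pre)"
  using assms(2)
proof cases
  case (c_pq E v m A Es R S P k)
  from assms(1) c_pq obtain t where t: "wt (fill E (App (MethT m) v)) t" "tok t Es"
    and mM: "meths (fill E (App (MethT m) v)) \<subseteq> dom R \<union> A"
    and com: "COM R0 P0 A0 pre Es R S P A" and od: "odd (length pre)" by auto
  obtain t0 where t0: "wt (App (MethT m) v) t0" "\<forall>N. wt N t0 \<longrightarrow> wt (fill E N) t"
    using wt_fill[OF t(1)] by metis
  have t0r: "t0 = resty m" and wv: "wt v (argty m)" using t0(1) by auto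
  have fk: "fok (FCtx m E # Es)" using t0 t0r t(2) by auto
  have mv: "meths v \<subseteq> dom R \<union> A" and mE: "meths (fill E UnitT) \<subseteq> dom R \<union> A"
    using mM meths_fill[of E "App (MethT m) v"] by auto
  have "COM R0 P0 A0 (pre @ [a]) (FCtx m E # Es) R S (P \<union> (meths v \<inter> dom R)) A"
    using com c_pq od mE mv unfolding COM_def by (auto simp: fnames_def vnP_snoc vnO_snoc)
  moreover have "MF P0 A0 (dom R) A (pre @ [a]) (length pre)"
    using com c_pq od wv mv unfolding MF_def COM_def by auto
  ultimately show ?thesis using c_pq od fk by auto
next
  case (c_oq m P R v Es l S A k)
  from assms(1) c_oq have com: "COM R0 P0 A0 pre Es R S P A" and ev: "even (length pre)"
    and fk: "fok Es" by auto
  have ov: "is_val v" "wt v (argty m)" "meths v \<inter> dom R \<subseteq> P" using c_oq by (auto simp: o_val_def)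
  have wt: "wt (App (MethT m) v) (resty m)" using ov by (auto intro: wt.intros)
  have "COM R0 P0 A0 (pre @ [a]) (FNum m (l + 1) # Es) R S P (A \<union> (meths v - dom R))"
    using com c_oq ev unfolding COM_def by (auto simp: fnames_def vnP_snoc vnO_snoc)
  moreover have "meths (App (MethT m) v) \<subseteq> dom R \<union> (A \<union> (meths v - dom R))"
    using c_oq com unfolding COM_def by auto
  moreover have "MF P0 A0 (dom R) (A \<union> (meths v - dom R)) (pre @ [a]) (length pre)"
    using com c_oq ev ov unfolding MF_def COM_def by auto
  ultimately show ?thesis using c_oq ev fk wt by auto
next
  case (c_pa v m l Es R S P A k)
  from assms(1) c_pa obtain t where t: "wt v t" "tok t (FNum m l # Es)"
    and mM: "meths v \<subseteq> dom R \<union> A"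
    and com: "COM R0 P0 A0 pre (FNum m l # Es) R S P A" and od: "odd (length pre)" by auto
  from com obtain j st where st: "stk pre = (j, m) # st" "even j" "list_all2 srel Es st"
    unfolding COM_def by (cases "stk pre") (auto simp: list_all2_Cons1)
  have "COM R0 P0 A0 (pre @ [a]) Es R S (P \<union> (meths v \<inter> dom R)) A"
    using com c_pa od st mM unfolding COM_def by (auto simp: fnames_def vnP_snoc vnO_snoc)
  moreover have "MF P0 A0 (dom R) A (pre @ [a]) (length pre)"
    using com c_pa od st t mM unfolding MF_def COM_def by auto
  ultimately show ?thesis using c_pa od t by auto
next
  case (c_oa R P v m E Es l S A k)
  from assms(1) c_oa have com: "COM R0 P0 A0 pre (FCtx m E # Es) R S P A" and ev: "even (length pre)"
    and fk: "fok (FCtx m E # Es)" by auto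
  have ov: "is_val v" "wt v (resty m)" "meths v \<inter> dom R \<subseteq> P" using c_oa by (auto simp: o_val_def)
  from com obtain j st where st: "stk pre = (j, m) # st" "odd j" "list_all2 srel Es st"
    unfolding COM_def by (cases "stk pre") (auto simp: list_all2_Cons1)
  from fk obtain t where t: "\<forall>v. wt v (resty m) \<longrightarrow> wt (fill E v) t" "tok t Es" by auto
  have mE: "meths (fill E UnitT) \<subseteq> dom R \<union> A" using com unfolding COM_def fnames_def by auto
  have "COM R0 P0 A0 (pre @ [a]) Es R S P (A \<union> (meths v - dom R))"
    using com c_oa ev st unfolding COM_def by (auto simp: fnames_def vnP_snoc vnO_snoc)
  moreover have "meths (fill E v) \<subseteq> dom R \<union> (A \<union> (meths v - dom R))"
    using mE meths_fill[of E v] by auto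
  moreover have "MF P0 A0 (dom R) (A \<union> (meths v - dom R)) (pre @ [a]) (length pre)"
    using com c_oa ev ov st unfolding MF_def COM_def by auto
  ultimately show ?thesis using c_oa ev t ov by auto
qed

lemma LI_trace:
  assumes "ctrace c t c'" "LI R0 P0 A0 pre c" "\<forall>n<length pre. MF P0 A0 (cdom c) (cA c) pre n"
  shows "LI R0 P0 A0 (pre @ t) c' \<and> (\<forall>n<length (pre @ t). MF P0 A0 (cdom c') (cA c') (pre @ t) n)
    \<and> cdom c \<subseteq> cdom c' \<and> cA c \<subseteq> cA c'"
  using assms
proof (induct arbitrary: pre rule: ctrace.induct)
  case (ct_refl c)
  then show ?case by auto
next
  case (ct_int c c' t c'')
  have s: "LI R0 P0 A0 pre c' \<and> cdom c \<subseteq> cdom c' \<and> cA c' = cA c" using LI_int ct_int by blast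
  have "\<forall>n<length pre. MF P0 A0 (cdom c') (cA c') pre n" using ct_int(5) s MF_mono by blast
  then show ?case using ct_int(3)[of pre] s by auto
next
  case (ct_mv c a c' t c'')
  have s: "LI R0 P0 A0 (pre @ [a]) c' \<and> cdom c \<subseteq> cdom c' \<and> cA c \<subseteq> cA c'
     \<and> MF P0 A0 (cdom c') (cA c') (pre @ [a]) (length pre)" using LI_mv ct_mv by blast
  have "\<forall>n<length (pre @ [a]). MF P0 A0 (cdom c') (cA c') (pre @ [a]) n"
  proof (intro allI impI)
    fix n assume "n < length (pre @ [a])"
    then consider "n < length pre" | "n = length pre" by fastforce
    then show "MF P0 A0 (cdom c') (cA c') (pre @ [a]) n"
    proof cases
      case 1 then show ?thesis using ct_mv(5) s MF_mono MF_append by metis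
    next
      case 2 then show ?thesis using s by simp
    qed
  qed
  then show ?case using ct_mv(3)[of "pre @ [a]"] s by auto
qed


lemma wt_lam_arrow: "wt (Lam x M) (TArrow a b) \<Longrightarrow> varty x = a \<and> wt M b"
  by auto

lemma builds_facts:
  assumes "builds N ds R S P A res"
  shows "res = (R', S', P', A') \<Longrightarrow> (\<forall>d\<in>set ds. decl_typed d) \<Longrightarrow> Rty R \<Longrightarrow> Sty S \<Longrightarrow>
    Rty R' \<and> Sty S' \<and> P' = P \<union> set (concat (map decl_pub ds)) \<and> A' = A \<union> set (concat (map decl_abs ds))
    \<and> dom S' = dom S \<union> set (concat (map decl_ref ds))
    \<and> dom R \<union> set (concat (map decl_meth ds)) \<subseteq> dom R'
    \<and> dom R' - dom R - set (concat (map decl_meth ds)) \<subseteq> - N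
    \<and> rnames R' \<subseteq> rnames R \<union> \<Union>(meths ` set (concat (map decl_terms ds)))
    \<and> snames S' \<subseteq> snames S \<union> dom R'
    \<and> (finite (dom R) \<longrightarrow> finite (dom R'))"
  using assms
proof (induct arbitrary: R' S' P' A' rule: builds.induct)
  case (b_nil N R S P A)
  then show ?case by auto
next
  case (b_abs N ds R S P m A res)
  then show ?case by auto
next
  case (b_pub N ds R m x M S P A res)
  have ty: "varty x = argty m \<and> wt M (resty m)" using b_pub(4) by auto
  have sR: "Rty (R(m \<mapsto> (x, M)))" using b_pub(5) ty by (auto simp: Rty_def)
  have t: "\<forall>d\<in>set ds. decl_typed d" using b_pub(4) by simp
  note ih = b_pub(2)[OF b_pub(3) t sR b_pub(6)]
  have dm: "dom (R(m \<mapsto> (x, M))) = insert m (dom R)" by simp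
  have rn: "rnames (\<lambda>a. if a = m then Some (x, M) else R a) \<subseteq> rnames R \<union> meths M"
    using rnames_upd[of R m x M] by (simp add: fun_upd_def)
  show ?case unfolding dm using ih[unfolded dm] rn by (auto simp del: domIff)
next
  case (b_priv N ds R m x M S P A res)
  have ty: "varty x = argty m \<and> wt M (resty m)" using b_priv(4) by auto
  have sR: "Rty (R(m \<mapsto> (x, M)))" using b_priv(5) ty by (auto simp: Rty_def)
  have t: "\<forall>d\<in>set ds. decl_typed d" using b_priv(4) by simp
  note ih = b_priv(2)[OF b_priv(3) t sR b_priv(6)]
  have dm: "dom (R(m \<mapsto> (x, M))) = insert m (dom R)" by simp
  have rn: "rnames (\<lambda>a. if a = m then Some (x, M) else R a) \<subseteq> rnames R \<union> meths M"
    using rnames_upd[of R m x M] by (simp add: fun_upd_def)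
  show ?case unfolding dm using ih[unfolded dm] rn by (auto simp del: domIff)
next
  case (b_refint N ds R S r i P A res)
  have sS: "Sty (S(r \<mapsto> IntT i))" using b_refint(6) b_refint(4) by (auto simp: Sty_def intro: wt.intros)
  have t: "\<forall>d\<in>set ds. decl_typed d" using b_refint(4) by simp
  note ih = b_refint(2)[OF b_refint(3) t b_refint(5) sS]
  have sn: "snames (\<lambda>a. if a = r then Some (IntT i) else S a) \<subseteq> snames S"
    using snames_upd[of S r "IntT i"] by (simp add: fun_upd_def)
  have ds: "dom (\<lambda>a. if a = r then Some (IntT i) else S a) = insert r (dom S)" by (auto simp: dom_def)
  show ?case using ih[unfolded ds] sn by (auto simp del: domIff)
next
  case (b_reflam m R N r ds x M S P A res)
  have ty: "varty x = argty m \<and> wt M (resty m)" using b_reflam(7) b_reflam(3) by auto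
  have sR: "Rty (R(m \<mapsto> (x, M)))" using b_reflam(8) ty by (auto simp: Rty_def)
  have sS: "Sty (S(r \<mapsto> MethT m))" using b_reflam(9) b_reflam(3) by (auto simp: Sty_def intro: wt.intros)
  have t: "\<forall>d\<in>set ds. decl_typed d" using b_reflam(7) by simp
  note ih = b_reflam(5)[OF b_reflam(6) t sR sS]
  have dm: "dom (R(m \<mapsto> (x, M))) = insert m (dom R)" by simp
  have rn: "rnames (\<lambda>a. if a = m then Some (x, M) else R a) \<subseteq> rnames R \<union> meths M"
    using rnames_upd[of R m x M] by (simp add: fun_upd_def)
  have sn: "snames (\<lambda>a. if a = r then Some (MethT m) else S a) \<subseteq> snames S \<union> {m}"
    using snames_upd[of S r "MethT m"] by (simp add: fun_upd_def)
  have ds: "dom (S(r \<mapsto> MethT m)) = insert r (dom S)" by simp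
  show ?case unfolding dm using ih[unfolded dm ds] rn sn b_reflam(2) by (auto simp del: domIff)
qed

lemma pub_sub_meth: "set (concat (map decl_pub ds)) \<subseteq> set (concat (map decl_meth ds))"
proof (induct ds)
  case (Cons d ds) then show ?case by (cases d) auto
qed simp

lemma lib_build_facts:
  assumes wf: "wf_library L" and b: "lib_builds L R0 S0 P0 A0"
  shows "Rty R0 \<and> Sty S0 \<and> P0 = set (concat (map decl_pub L)) \<and> A0 = set (abstract_meths L)
    \<and> dom S0 = set (defined_refs L) \<and> set (defined_meths L) \<subseteq> dom R0
    \<and> dom R0 - set (defined_meths L) \<subseteq> - prog_names L
    \<and> rnames R0 \<union> snames S0 \<subseteq> dom R0 \<union> A0 \<and> dom R0 \<inter> A0 = {} \<and> P0 \<subseteq> dom R0 \<and> finite (dom R0)"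
proof -
  have typed: "\<forall>d\<in>set L. decl_typed d" using wf unfolding wf_library_def by blast
  have f: "Rty R0 \<and> Sty S0 \<and> P0 = {} \<union> set (concat (map decl_pub L)) \<and> A0 = {} \<union> set (concat (map decl_abs L))
    \<and> dom S0 = dom Map.empty \<union> set (concat (map decl_ref L))
    \<and> dom Map.empty \<union> set (concat (map decl_meth L)) \<subseteq> dom R0
    \<and> dom R0 - dom Map.empty - set (concat (map decl_meth L)) \<subseteq> - prog_names L
    \<and> rnames R0 \<subseteq> rnames Map.empty \<union> \<Union>(meths ` set (concat (map decl_terms L)))
    \<and> snames S0 \<subseteq> snames Map.empty \<union> dom R0
    \<and> (finite (dom Map.empty) \<longrightarrow> finite (dom R0))"
    using builds_facts[OF b[unfolded lib_builds_def], of R0 S0 P0 A0] typed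
    by (auto simp: Rty_def Sty_def)
  have e: "rnames Map.empty = {}" "snames Map.empty = {}" by (auto simp: rnames_def snames_def)
  have wfn: "\<forall>M\<in>set (lib_terms L). meths M \<subseteq> set (defined_meths L) \<union> set (abstract_meths L)"
    and dj: "set (abstract_meths L) \<inter> set (defined_meths L) = {}"
    using wf unfolding wf_library_def by auto
  have pn: "set (abstract_meths L) \<subseteq> prog_names L" by (auto simp: prog_names_def)
  have A0: "A0 = set (abstract_meths L)" using f by (simp add: abstract_meths_def)
  have r0: "rnames R0 \<subseteq> \<Union>(meths ` set (lib_terms L))"
    using f e unfolding lib_terms_def by simp
  have r: "rnames R0 \<subseteq> set (defined_meths L) \<union> set (abstract_meths L)"
    using r0 wfn by blast
  have f2: "dom R0 - set (defined_meths L) \<subseteq> - prog_names L" using f by (simp add: defined_meths_def)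
  have dR: "dom R0 \<inter> A0 = {}" using f2 A0 pn dj by blast
  have p1: "P0 = set (concat (map decl_pub L))" and p2: "set (concat (map decl_meth L)) \<subseteq> dom R0"
    using f by simp_all
  have P0: "P0 \<subseteq> dom R0" unfolding p1 using pub_sub_meth[of L] p2 by (rule subset_trans)
  have s0: "snames S0 \<subseteq> dom R0" using f e by simp
  have c1: "rnames R0 \<union> snames S0 \<subseteq> dom R0 \<union> A0" using r s0 p2 A0 unfolding defined_meths_def by blast
  show ?thesis using f A0 c1 dR P0 p2 unfolding defined_refs_def defined_meths_def by (simp del: domIff)
qed

lemma lib_facts:
  assumes wf: "wf_library L" and b: "lib_builds L R0 S0 P0 A0"
    and tr: "ctrace (OC [] 0 R0 S0 P0 A0 0) \<tau> \<rho>"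
  shows "\<exists>D AF. dom R0 \<subseteq> D \<and> A0 \<subseteq> AF \<and> D \<inter> AF = {} \<and> (\<forall>n<length \<tau>. MF P0 A0 D AF \<tau> n)"
proof -
  note bf = lib_build_facts[OF wf b]
  have "LI R0 P0 A0 [] (OC [] 0 R0 S0 P0 A0 0)"
    using bf by (auto simp: COM_def fnames_def)
  from LI_trace[OF tr this] have
    r: "LI R0 P0 A0 \<tau> \<rho> \<and> (\<forall>n<length \<tau>. MF P0 A0 (cdom \<rho>) (cA \<rho>) \<tau> n)" by simp
  have "dom R0 \<subseteq> cdom \<rho> \<and> A0 \<subseteq> cA \<rho> \<and> cdom \<rho> \<inter> cA \<rho> = {}"
    using r by (cases \<rho>) (auto simp: COM_def)
  then show ?thesis using r by blast
qed


abbreviation isteps :: "config \<Rightarrow> config \<Rightarrow> bool" where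
  "isteps c c' \<equiv> ctrace c [] c'"

lemma ctrace_trans: "ctrace c t1 c' \<Longrightarrow> ctrace c' t2 c'' \<Longrightarrow> ctrace c (t1 @ t2) c''"
  by (induct rule: ctrace.induct) (auto intro: ctrace.intros)

lemma isteps_trans: "isteps c c' \<Longrightarrow> isteps c' c'' \<Longrightarrow> isteps c c''"
  using ctrace_trans[of c "[]" c' "[]" c''] by simp

lemma step_ctx:
  assumes "ectx_ok E" "\<And>X. head X (M, R, S, k) (M', R', S', k')"
  shows "isteps (PC Es (fill E M) R S P A k) (PC Es (fill E M') R' S' P A k')"
proof -
  have "red (used_names Es (fill E M) R S P A) (fill E M, R, S, k) (fill E M', R', S', k')"
    using assms by (auto intro: red.intros)
  then have "cstep (PC Es (fill E M) R S P A k) None (PC Es (fill E M') R' S' P A k')"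
    by (rule c_int)
  then show ?thesis by (auto intro: ctrace.intros)
qed

fun sev :: "store \<Rightarrow> tm \<Rightarrow> (tm \<times> store) option" where
  "sev S (IntT i) = Some (IntT i, S)"
| "sev S UnitT = Some (UnitT, S)"
| "sev S (MethT m) = Some (MethT m, S)"
| "sev S (Deref r) = (case S r of Some v \<Rightarrow> if is_val v then Some (v, S) else None | None \<Rightarrow> None)"
| "sev S (Pair M N) = (case sev S M of None \<Rightarrow> None | Some (v, S1) \<Rightarrow>
      (case sev S1 N of None \<Rightarrow> None | Some (w, S2) \<Rightarrow> Some (Pair v w, S2)))"
| "sev S (Fst M) = (case sev S M of Some (Pair v w, S1) \<Rightarrow> Some (v, S1) | _ \<Rightarrow> None)"
| "sev S (Snd M) = (case sev S M of Some (Pair v w, S1) \<Rightarrow> Some (w, S1) | _ \<Rightarrow> None)"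
| "sev S (Assign r M) = (case sev S M of None \<Rightarrow> None | Some (v, S1) \<Rightarrow> Some (UnitT, S1(r \<mapsto> v)))"
| "sev S (BinOp op M N) = (case sev S M of Some (IntT i, S1) \<Rightarrow>
      (case sev S1 N of Some (IntT j, S2) \<Rightarrow> Some (IntT (opsem op i j), S2) | _ \<Rightarrow> None) | _ \<Rightarrow> None)"
| "sev S (If M N1 N0) = (case sev S M of Some (IntT i, S1) \<Rightarrow>
      (if i \<noteq> 0 then sev S1 N1 else sev S1 N0) | _ \<Rightarrow> None)"
| "sev S _ = None"

lemma sev_sound:
  "sev S M = Some (v, S') \<Longrightarrow> is_val v \<and> (\<forall>E Es R P A k. ectx_ok E \<longrightarrow>
     isteps (PC Es (fill E M) R S P A k) (PC Es (fill E v) R S' P A k))"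
proof (induct S M arbitrary: v S' rule: sev.induct)
  case (1 S i) then show ?case by (auto intro: ctrace.intros)
next
  case (2 S) then show ?case by (auto intro: ctrace.intros)
next
  case (3 S m) then show ?case by (auto intro: ctrace.intros)
next
  case (4 S r)
  then have sr: "S r = Some v" "is_val v" "S' = S" by (auto split: option.splits if_splits)
  show ?case
  proof (intro conjI allI impI)
    fix E Es R P A k assume "ectx_ok E"
    then show "isteps (PC Es (fill E (Deref r)) R S P A k) (PC Es (fill E v) R S' P A k)"
      using sr by (auto intro!: step_ctx h_deref)
  qed (rule sr(2))
next
  case (5 S M N)
  then obtain v1 S1 w S2 where e: "sev S M = Some (v1, S1)" "sev S1 N = Some (w, S2)"
      "v = Pair v1 w" "S' = S2"
    by (auto split: option.splits)
  have i1: "is_val v1 \<and> (\<forall>E Es R P A k. ectx_ok E \<longrightarrow>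
     isteps (PC Es (fill E M) R S P A k) (PC Es (fill E v1) R S1 P A k))" using 5(1) e by auto
  have i2: "is_val w \<and> (\<forall>E Es R P A k. ectx_ok E \<longrightarrow>
     isteps (PC Es (fill E N) R S1 P A k) (PC Es (fill E w) R S2 P A k))" using 5(2) e by auto
  show ?case
  proof (intro conjI allI impI)
    show "is_val v" using e i1 i2 by simp
    fix E Es R P A k assume ok: "ectx_ok E"
    have a: "isteps (PC Es (fill E (Pair M N)) R S P A k) (PC Es (fill E (Pair v1 N)) R S1 P A k)"
      using i1 ok spec[OF spec[OF spec[OF spec[OF spec[OF spec[OF i1[THEN conjunct2], of "ecomp E (EPairL Hole N)"]]]]]]
      by auto
    have b: "isteps (PC Es (fill E (Pair v1 N)) R S1 P A k) (PC Es (fill E (Pair v1 w)) R S2 P A k)"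
      using i1 i2 ok spec[OF spec[OF spec[OF spec[OF spec[OF spec[OF i2[THEN conjunct2], of "ecomp E (EPairR v1 Hole)"]]]]]]
      by auto
    show "isteps (PC Es (fill E (Pair M N)) R S P A k) (PC Es (fill E v) R S' P A k)"
      using isteps_trans[OF a b] e by simp
  qed
next
  case (6 S M)
  then obtain v1 w S1 where e: "sev S M = Some (Pair v1 w, S1)" "v = v1" "S' = S1"
    by (auto split: option.splits tm.splits)
  have i1: "is_val (Pair v1 w) \<and> (\<forall>E Es R P A k. ectx_ok E \<longrightarrow>
     isteps (PC Es (fill E M) R S P A k) (PC Es (fill E (Pair v1 w)) R S1 P A k))" using 6(1) e by auto
  show ?case
  proof (intro conjI allI impI)
    show "is_val v" using e i1 by simp
    fix E Es R P A k assume ok: "ectx_ok E"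
    have a: "isteps (PC Es (fill E (Fst M)) R S P A k) (PC Es (fill E (Fst (Pair v1 w))) R S1 P A k)"
      using i1 ok spec[OF spec[OF spec[OF spec[OF spec[OF spec[OF i1[THEN conjunct2], of "ecomp E (EFst Hole)"]]]]]]
      by auto
    have b: "isteps (PC Es (fill E (Fst (Pair v1 w))) R S1 P A k) (PC Es (fill E v1) R S1 P A k)"
      using i1 ok by (auto intro!: step_ctx h_fst)
    show "isteps (PC Es (fill E (Fst M)) R S P A k) (PC Es (fill E v) R S' P A k)"
      using isteps_trans[OF a b] e by simp
  qed
next
  case (7 S M)
  then obtain v1 w S1 where e: "sev S M = Some (Pair v1 w, S1)" "v = w" "S' = S1"
    by (auto split: option.splits tm.splits)
  have i1: "is_val (Pair v1 w) \<and> (\<forall>E Es R P A k. ectx_ok E \<longrightarrow>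
     isteps (PC Es (fill E M) R S P A k) (PC Es (fill E (Pair v1 w)) R S1 P A k))" using 7(1) e by auto
  show ?case
  proof (intro conjI allI impI)
    show "is_val v" using e i1 by simp
    fix E Es R P A k assume ok: "ectx_ok E"
    have a: "isteps (PC Es (fill E (Snd M)) R S P A k) (PC Es (fill E (Snd (Pair v1 w))) R S1 P A k)"
      using i1 ok spec[OF spec[OF spec[OF spec[OF spec[OF spec[OF i1[THEN conjunct2], of "ecomp E (ESnd Hole)"]]]]]]
      by auto
    have b: "isteps (PC Es (fill E (Snd (Pair v1 w))) R S1 P A k) (PC Es (fill E w) R S1 P A k)"
      using i1 ok by (auto intro!: step_ctx h_snd)
    show "isteps (PC Es (fill E (Snd M)) R S P A k) (PC Es (fill E v) R S' P A k)"
      using isteps_trans[OF a b] e by simp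
  qed
next
  case (8 S r M)
  then obtain v1 S1 where e: "sev S M = Some (v1, S1)" "v = UnitT" "S' = S1(r \<mapsto> v1)"
    by (auto split: option.splits)
  have i1: "is_val v1 \<and> (\<forall>E Es R P A k. ectx_ok E \<longrightarrow>
     isteps (PC Es (fill E M) R S P A k) (PC Es (fill E v1) R S1 P A k))" using 8(1) e by auto
  show ?case
  proof (intro conjI allI impI)
    show "is_val v" using e by simp
    fix E Es R P A k assume ok: "ectx_ok E"
    have a: "isteps (PC Es (fill E (Assign r M)) R S P A k) (PC Es (fill E (Assign r v1)) R S1 P A k)"
      using i1 ok spec[OF spec[OF spec[OF spec[OF spec[OF spec[OF i1[THEN conjunct2], of "ecomp E (EAssign r Hole)"]]]]]]
      by auto
    have b: "isteps (PC Es (fill E (Assign r v1)) R S1 P A k) (PC Es (fill E UnitT) R (S1(r \<mapsto> v1)) P A k)"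
      using i1 ok by (auto intro!: step_ctx h_assign)
    show "isteps (PC Es (fill E (Assign r M)) R S P A k) (PC Es (fill E v) R S' P A k)"
      using isteps_trans[OF a b] e by simp
  qed
next
  case (9 S op M N)
  then obtain i S1 j S2 where e: "sev S M = Some (IntT i, S1)" "sev S1 N = Some (IntT j, S2)"
      "v = IntT (opsem op i j)" "S' = S2"
    by (auto split: option.splits tm.splits)
  have i1: "(\<forall>E Es R P A k. ectx_ok E \<longrightarrow>
     isteps (PC Es (fill E M) R S P A k) (PC Es (fill E (IntT i)) R S1 P A k))" using 9(1) e by auto
  have i2: "(\<forall>E Es R P A k. ectx_ok E \<longrightarrow>
     isteps (PC Es (fill E N) R S1 P A k) (PC Es (fill E (IntT j)) R S2 P A k))" using 9(2) e by auto
  show ?case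
  proof (intro conjI allI impI)
    show "is_val v" using e by simp
    fix E Es R P A k assume ok: "ectx_ok E"
    have a: "isteps (PC Es (fill E (BinOp op M N)) R S P A k) (PC Es (fill E (BinOp op (IntT i) N)) R S1 P A k)"
      using ok spec[OF spec[OF spec[OF spec[OF spec[OF spec[OF i1, of "ecomp E (EOpL op Hole N)"]]]]]]
      by auto
    have b: "isteps (PC Es (fill E (BinOp op (IntT i) N)) R S1 P A k) (PC Es (fill E (BinOp op (IntT i) (IntT j))) R S2 P A k)"
      using ok spec[OF spec[OF spec[OF spec[OF spec[OF spec[OF i2, of "ecomp E (EOpR op (IntT i) Hole)"]]]]]]
      by auto
    have c: "isteps (PC Es (fill E (BinOp op (IntT i) (IntT j))) R S2 P A k) (PC Es (fill E (IntT (opsem op i j))) R S2 P A k)"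
      using ok by (auto intro!: step_ctx h_op)
    show "isteps (PC Es (fill E (BinOp op M N)) R S P A k) (PC Es (fill E v) R S' P A k)"
      using isteps_trans[OF isteps_trans[OF a b] c] e by simp
  qed
next
  case (10 S M N1 N0)
  then obtain i S1 where e: "sev S M = Some (IntT i, S1)"
    by (auto split: option.splits tm.splits)
  have i1: "(\<forall>E Es R P A k. ectx_ok E \<longrightarrow>
     isteps (PC Es (fill E M) R S P A k) (PC Es (fill E (IntT i)) R S1 P A k))" using 10(1) e by auto
  show ?case
  proof (cases "i \<noteq> 0")
    case True
    then have e2: "sev S1 N1 = Some (v, S')" using 10(4) e by simp
    have i2: "is_val v \<and> (\<forall>E Es R P A k. ectx_ok E \<longrightarrow>
     isteps (PC Es (fill E N1) R S1 P A k) (PC Es (fill E v) R S' P A k))" using 10(2)[OF e refl refl True e2] by simp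
    show ?thesis
    proof (intro conjI allI impI)
      show "is_val v" using i2 by simp
      fix E Es R P A k assume ok: "ectx_ok E"
      have a: "isteps (PC Es (fill E (If M N1 N0)) R S P A k) (PC Es (fill E (If (IntT i) N1 N0)) R S1 P A k)"
        using ok spec[OF spec[OF spec[OF spec[OF spec[OF spec[OF i1, of "ecomp E (EIf Hole N1 N0)"]]]]]]
        by auto
      have b: "isteps (PC Es (fill E (If (IntT i) N1 N0)) R S1 P A k) (PC Es (fill E N1) R S1 P A k)"
        using ok True by (auto intro!: step_ctx h_if1)
      show "isteps (PC Es (fill E (If M N1 N0)) R S P A k) (PC Es (fill E v) R S' P A k)"
        using isteps_trans[OF isteps_trans[OF a b]] i2 ok by blast
    qed
  next
    case False
    then have e2: "sev S1 N0 = Some (v, S')" using 10(4) e by simp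
    have i2: "is_val v \<and> (\<forall>E Es R P A k. ectx_ok E \<longrightarrow>
     isteps (PC Es (fill E N0) R S1 P A k) (PC Es (fill E v) R S' P A k))" using 10(3)[OF e refl refl False e2] by simp
    show ?thesis
    proof (intro conjI allI impI)
      show "is_val v" using i2 by simp
      fix E Es R P A k assume ok: "ectx_ok E"
      have a: "isteps (PC Es (fill E (If M N1 N0)) R S P A k) (PC Es (fill E (If (IntT i) N1 N0)) R S1 P A k)"
        using ok spec[OF spec[OF spec[OF spec[OF spec[OF spec[OF i1, of "ecomp E (EIf Hole N1 N0)"]]]]]]
        by auto
      have b: "isteps (PC Es (fill E (If (IntT i) N1 N0)) R S1 P A k) (PC Es (fill E N0) R S1 P A k)"
        using ok False by (auto intro!: step_ctx h_if0)
      show "isteps (PC Es (fill E (If M N1 N0)) R S P A k) (PC Es (fill E v) R S' P A k)"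
        using isteps_trans[OF isteps_trans[OF a b]] i2 ok by blast
    qed
  qed
qed auto

lemma sev_steps:
  "sev S M = Some (v, S') \<Longrightarrow> ectx_ok E \<Longrightarrow>
     isteps (PC Es (fill E M) R S P A k) (PC Es (fill E v) R S' P A k)"
  using sev_sound by blast

lemma sev_isval: "sev S M = Some (v, S') \<Longrightarrow> is_val v"
  using sev_sound by blast

lemma sev_val: "is_val v \<Longrightarrow> sev S v = Some (v, S)"
  by (induct v) auto


fun mnum :: "meth \<Rightarrow> nat" where "mnum (Meth n a b) = n"
fun mname :: "move \<Rightarrow> meth" where "mname (Call m v) = m" | "mname (Ret m v) = m"

abbreviation Seq :: "tm \<Rightarrow> tm \<Rightarrow> tm" where "Seq a b \<equiv> Snd (Pair a b)"

definition loopname :: "nat \<Rightarrow> ty \<Rightarrow> meth" where "loopname K b = Meth K TUnit b"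
fun initn :: "nat \<Rightarrow> meth \<Rightarrow> meth" where "initn K (Meth n a b) = Meth (K + 1 + n) a b"
definition cnt :: "nat \<Rightarrow> ref" where "cnt B = Ref B TInt"
fun rref :: "nat \<Rightarrow> meth \<Rightarrow> ref" where "rref B (Meth n a b) = Ref (B + 1 + n) (TArrow a b)"

definition vY :: "ty \<Rightarrow> var" where "vY t = Var 0 t"
definition vZ :: "ty \<Rightarrow> var" where "vZ t = Var 1 t"
definition vG :: "ty \<Rightarrow> var" where "vG t = Var 2 t"
definition vW :: "var" where "vW = Var 3 TUnit"
definition vX :: "ty \<Rightarrow> var" where "vX t = Var 4 t"

lemma refty_rref[simp]: "refty (rref B d) = TArrow (argty d) (resty d)"
  by (cases d) auto
lemma refty_cnt[simp]: "refty (cnt B) = TInt" by (simp add: cnt_def)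
lemma rref_inj: "rref B d = rref B d' \<longleftrightarrow> d = d'"
  by (cases d; cases d') auto
lemma rref_ne_cnt[simp]: "rref B d \<noteq> cnt B" "cnt B \<noteq> rref B d"
  by (cases d; simp add: cnt_def)+
lemma varty_simps[simp]: "varty (vY t) = t" "varty (vZ t) = t" "varty (vG t) = t" "varty vW = TUnit" "varty (vX t) = t"
  by (simp_all add: vY_def vZ_def vG_def vW_def vX_def)
lemma argty_loop[simp]: "argty (loopname K b) = TUnit" "resty (loopname K b) = b"
  by (simp_all add: loopname_def)
lemma initn_ty[simp]: "argty (initn K d) = argty d" "resty (initn K d) = resty d"
  by (cases d; simp)+
lemma mnum_initn[simp]: "mnum (initn K d) = K + 1 + mnum d" by (cases d) auto
lemma mnum_loop[simp]: "mnum (loopname K b) = K" by (simp add: loopname_def)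
lemma initn_inj: "initn K d = initn K d' \<longleftrightarrow> d = d'"
  by (cases d; cases d') auto
lemma loopname_inj: "loopname K b = loopname K b' \<longleftrightarrow> b = b'"
  by (simp add: loopname_def)
lemma is_prod_arrow[simp]: "\<not> is_prod (TArrow a b)" "\<not> is_prod TInt" by simp_all

lemma finite_meths[simp]: "finite (meths M)" by (induct M) auto

lemma val_closed: "is_val v \<Longrightarrow> fv v = {}" by (induct v) auto
lemma val_nobox: "is_val v \<Longrightarrow> \<not> has_box v" by (induct v) auto
lemma val_noassert: "is_val v \<Longrightarrow> \<not> has_assert v" by (induct v) auto
lemma val_norefs: "is_val v \<Longrightarrow> refs v = {}" by (induct v) auto

lemma subst_nofv: "x \<notin> fv M \<Longrightarrow> subst x v M = M"
  by (induct M) auto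

locale cl =
  fixes tau :: "move list" and A0l P0l :: "meth list" and AF D :: "meth set" and K B :: nat
  assumes mf: "\<forall>n<length tau. MF (set P0l) (set A0l) D AF tau n"
    and DAF: "D \<inter> AF = {}" and A0AF: "set A0l \<subseteq> AF" and P0D: "set P0l \<subseteq> D"
    and dA: "distinct A0l" and dP: "distinct P0l"
    and Kbig: "\<forall>m \<in> set A0l \<union> set P0l \<union> (\<Union>i<length tau. insert (mname (tau ! i)) (meths (mval (tau ! i)))). mnum m < K"
begin

definition A0 where "A0 = set A0l"
definition P0 where "P0 = set P0l"
definition allnames where "allnames = (\<Union>i<length tau. insert (mname (tau ! i)) (meths (mval (tau ! i))))"
definition F where "F = allnames \<inter> AF - A0"
definition Stat where "Stat = A0 \<union> P0 \<union> F"
definition Dset where "Dset = allnames - Stat"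

lemma fin_allnames: "finite allnames" unfolding allnames_def by auto
lemma fin_F: "finite F" unfolding F_def using fin_allnames by auto
lemma fin_Dset: "finite Dset" unfolding Dset_def using fin_allnames by auto

definition Fl where "Fl = (SOME l. set l = F \<and> distinct l)"
definition Dl where "Dl = (SOME l. set l = Dset \<and> distinct l)"

lemma Fl: "distinct Fl" "set Fl = F"
  using someI_ex[OF finite_distinct_list[OF fin_F]] unfolding Fl_def by auto
lemma Dl: "distinct Dl" "set Dl = Dset"
  using someI_ex[OF finite_distinct_list[OF fin_Dset]] unfolding Dl_def by auto

definition tys where "tys = remdups (TUnit # map resty (A0l @ Fl))"

fun tr :: "tm \<Rightarrow> tm" where
  "tr (MethT d) = (if d \<in> Stat then MethT d else Deref (rref B d))"
| "tr (Pair a b) = Pair (tr a) (tr b)"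
| "tr t = t"

fun stcode :: "tm \<Rightarrow> tm \<Rightarrow> tm" where
  "stcode p (MethT d) = (if d \<in> Stat then UnitT else Assign (rref B d) p)"
| "stcode p (Pair a b) = Seq (stcode (Fst p) a) (stcode (Snd p) b)"
| "stcode p t = UnitT"

fun stchain :: "tm \<Rightarrow> (nat \<times> tm) list \<Rightarrow> tm" where
  "stchain p [] = UnitT"
| "stchain p ((c, v) # xs) = If (BinOp Equal (Deref (cnt B)) (IntT (int c))) (stcode p v) (stchain p xs)"

definition rl :: "ty \<Rightarrow> (nat \<times> tm) list" where
  "rl a = map (\<lambda>j. (Suc j, mval (tau ! j))) (filter (\<lambda>j. odd j \<and> wt (mval (tau ! j)) a) [0..<length tau])"

definition LOOP :: "ty \<Rightarrow> tm" where "LOOP b = App (MethT (loopname K b)) UnitT"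

definition CALLT :: "meth \<Rightarrow> tm \<Rightarrow> tm" where
  "CALLT f v = (if f \<in> Stat then App (MethT f) (tr v)
     else Let (vG (TArrow (argty f) (resty f))) (Deref (rref B f)) (App (VarT (vG (TArrow (argty f) (resty f)))) (tr v)))"

definition REST :: "meth \<Rightarrow> ty \<Rightarrow> tm" where
  "REST f b = Seq (stchain (VarT (vZ (resty f))) (rl (resty f))) (LOOP b)"

definition ACT :: "ty \<Rightarrow> nat \<Rightarrow> tm" where
  "ACT b i = (case tau ! i of
      Call f v \<Rightarrow> if is_val v \<and> wt v (argty f) then
          Seq (Assign (cnt B) (IntT (int i + 2))) (Let (vZ (resty f)) (CALLT f v) (REST f b))
        else LOOP b
    | Ret m v \<Rightarrow> if is_val v \<and> wt v b then Seq (Assign (cnt B) (IntT (int i + 2))) (tr v) else LOOP b)"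

fun disp :: "ty \<Rightarrow> nat list \<Rightarrow> tm" where
  "disp b [] = LOOP b"
| "disp b (i # is) = If (BinOp Equal (Deref (cnt B)) (IntT (int i))) (ACT b i) (disp b is)"

definition DISP :: "ty \<Rightarrow> tm" where "DISP b = disp b (filter even [0..<length tau])"

definition BODY :: "meth \<Rightarrow> tm" where
  "BODY m = Seq (stchain (VarT (vY (argty m))) (rl (argty m))) (LOOP (resty m))"

definition CALLCTX :: "meth \<Rightarrow> ty \<Rightarrow> ectx" where
  "CALLCTX f b = ESnd (EPairR UnitT (ELet (vZ (resty f)) Hole (REST f b)))"

definition cdecls :: "decl list" where
  "cdecls = map Abstract P0l @ map (\<lambda>m. PublicM m (vY (argty m)) (BODY m)) A0l
     @ map (\<lambda>m. PrivM m (vY (argty m)) (BODY m)) Fl @ map (\<lambda>b. PrivM (loopname K b) vW (DISP b)) tys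
     @ [RefInt (cnt B) 0]
     @ map (\<lambda>d. RefLam (rref B d) (vX (argty d)) (App (Deref (rref B d)) (VarT (vX (argty d))))) Dl"

definition client :: client where "client = (cdecls, LOOP TUnit)"

end


context cl begin

lemma tr_wt: "wt v t \<Longrightarrow> wt (tr v) t"
proof (induct v arbitrary: t)
  case (MethT d) then show ?case by (auto intro: wt_meth wt_deref[of "rref B d", simplified])
next
  case (Pair a b) then show ?case by (auto intro: wt_pair)
qed auto

lemma tr_sev: "is_val v \<Longrightarrow> (\<forall>d \<in> meths v. d \<notin> Stat \<longrightarrow> S (rref B d) = Some (MethT d)) \<Longrightarrow>
    sev S (tr v) = Some (v, S)"
  by (induct v) auto

lemma tr_props: "is_val v \<Longrightarrow> fv (tr v) = {} \<and> \<not> has_box (tr v) \<and> \<not> has_assert (tr v)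
   \<and> meths (tr v) \<subseteq> meths v \<inter> Stat \<and> refs (tr v) \<subseteq> rref B ` (meths v - Stat)"
  by (induct v) auto

lemma subst_tr: "is_val v \<Longrightarrow> subst x w (tr v) = tr v"
  using tr_props subst_nofv by blast

fun stupd :: "store \<Rightarrow> tm \<Rightarrow> store" where
  "stupd S (MethT d) = (if d \<in> Stat then S else S(rref B d \<mapsto> MethT d))"
| "stupd S (Pair a b) = stupd (stupd S a) b"
| "stupd S t = S"

lemma stupd_cnt[simp]: "stupd S v (cnt B) = S (cnt B)"
  by (induct v arbitrary: S) auto

lemma stupd_rref: "is_val v \<Longrightarrow> stupd S v (rref B d) = (if d \<in> meths v \<and> d \<notin> Stat then Some (MethT d) else S (rref B d))"
  by (induct v arbitrary: S) (auto simp: rref_inj)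

lemma stcode_sev: "(\<forall>S. sev S p = Some (v, S)) \<Longrightarrow> sev S (stcode p v) = Some (UnitT, stupd S v)"
proof (induct v arbitrary: p S)
  case (Pair a b)
  have fa: "\<forall>S. sev S (Fst p) = Some (a, S)" and fb: "\<forall>S. sev S (Snd p) = Some (b, S)"
    using Pair(3) by auto
  show ?case using Pair(1)[OF fa] Pair(2)[OF fb] by simp
qed auto

lemma subst_stcode: "subst x u (stcode p v) = stcode (subst x u p) v"
  by (induct v arbitrary: p) auto

lemma stcode_wt: "wt p t \<Longrightarrow> wt v t \<Longrightarrow> wt (stcode p v) TUnit"
proof (induct v arbitrary: p t)
  case (MethT d)
  then have "t = TArrow (argty d) (resty d)" by auto
  then show ?case using MethT by (auto intro: wt_unit wt_assign)
next
  case (Pair a b)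
  then obtain ta tb where t: "t = TProd ta tb" "wt a ta" "wt b tb" by auto
  have "wt (stcode (Fst p) a) TUnit" using Pair(1)[of "Fst p" ta] Pair(3) t by (auto intro: wt_fst)
  moreover have "wt (stcode (Snd p) b) TUnit" using Pair(2)[of "Snd p" tb] Pair(3) t by (auto intro: wt_snd)
  ultimately show ?case by (auto intro: wt_snd wt_pair)
qed (auto intro: wt_unit)

lemma stcode_fv: "fv (stcode p v) \<subseteq> fv p"
proof (induct v arbitrary: p)
  case (Pair a b) then show ?case using Pair(1)[of "Fst p"] Pair(2)[of "Snd p"] by auto
qed auto

lemma stcode_box: "\<not> has_box p \<Longrightarrow> \<not> has_box (stcode p v)"
proof (induct v arbitrary: p)
  case (Pair a b) then show ?case using Pair(1)[of "Fst p"] Pair(2)[of "Snd p"] by auto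
qed auto

lemma stcode_assert: "\<not> has_assert p \<Longrightarrow> \<not> has_assert (stcode p v)"
proof (induct v arbitrary: p)
  case (Pair a b) then show ?case using Pair(1)[of "Fst p"] Pair(2)[of "Snd p"] by auto
qed auto

lemma stcode_meths: "meths (stcode p v) \<subseteq> meths p"
proof (induct v arbitrary: p)
  case (Pair a b) then show ?case using Pair(1)[of "Fst p"] Pair(2)[of "Snd p"] by auto
qed auto

lemma stcode_refs: "refs (stcode p v) \<subseteq> refs p \<union> rref B ` (meths v - Stat)"
proof (induct v arbitrary: p)
  case (Pair a b)
  have 1: "refs (stcode (Fst p) a) \<subseteq> refs p \<union> rref B ` (meths a - Stat)" using Pair(1)[of "Fst p"] by simp
  have 2: "refs (stcode (Snd p) b) \<subseteq> refs p \<union> rref B ` (meths b - Stat)" using Pair(2)[of "Snd p"] by simp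
  show ?case using 1 2 by auto
qed auto

lemma sev_cond: "S (cnt B) = Some (IntT (int c)) \<Longrightarrow>
   sev S (BinOp Equal (Deref (cnt B)) (IntT (int c'))) = Some (IntT (if c = c' then 1 else 0), S)"
  by simp

lemma stchain_sev: "S (cnt B) = Some (IntT (int c)) \<Longrightarrow> map_of xs c = Some v \<Longrightarrow> (\<forall>S. sev S p = Some (v, S)) \<Longrightarrow>
   sev S (stchain p xs) = Some (UnitT, stupd S v)"
proof (induct xs)
  case Nil then show ?case by simp
next
  case (Cons x xs)
  obtain c' v' where x: "x = (c', v')" by (cases x)
  show ?case
  proof (cases "c' = c")
    case True
    then have "v' = v" using Cons x by simp
    then show ?thesis using Cons x True stcode_sev by simp
  next
    case False
    then have "map_of xs c = Some v" using Cons x by simp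
    then show ?thesis using Cons x False by simp
  qed
qed

lemma subst_stchain: "subst x u (stchain p xs) = stchain (subst x u p) xs"
  by (induct xs) (auto simp: subst_stcode)

lemma stchain_wt: "wt p t \<Longrightarrow> \<forall>(c, v)\<in>set xs. wt v t \<Longrightarrow> wt (stchain p xs) TUnit"
proof (induct xs)
  case Nil then show ?case by (auto intro: wt_unit)
next
  case (Cons x xs)
  obtain c v where x: "x = (c, v)" by (cases x)
  have cc: "wt (BinOp Equal (Deref (cnt B)) (IntT (int c))) TInt"
    by (rule wt_op) (auto intro: wt_deref[of "cnt B", simplified] wt_int)
  have s1: "wt (stcode p v) TUnit" using Cons x by (auto intro: stcode_wt)
  have s2: "wt (stchain p xs) TUnit" using Cons by auto
  show ?case unfolding x using wt_if[OF cc s1 s2] by simp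
qed

lemma stchain_fv: "fv (stchain p xs) \<subseteq> fv p"
proof (induct xs)
  case (Cons x xs) then show ?case using stcode_fv[of p "snd x"] by (cases x) auto
qed auto

lemma stchain_box: "\<not> has_box p \<Longrightarrow> \<not> has_box (stchain p xs)"
proof (induct xs)
  case (Cons x xs) then show ?case using stcode_box[of p "snd x"] by (cases x) auto
qed auto

lemma stchain_assert: "\<not> has_assert p \<Longrightarrow> \<not> has_assert (stchain p xs)"
proof (induct xs)
  case (Cons x xs) then show ?case using stcode_assert[of p "snd x"] by (cases x) auto
qed auto

lemma stchain_meths: "meths (stchain p xs) \<subseteq> meths p"
proof (induct xs)
  case (Cons x xs) then show ?case using stcode_meths[of p "snd x"] by (cases x) auto
qed auto

lemma stchain_refs: "refs (stchain p xs) \<subseteq> insert (cnt B) (refs p \<union> rref B ` (\<Union>(c, v)\<in>set xs. meths v - Stat))"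
proof (induct xs)
  case (Cons x xs)
  obtain c v where x: "x = (c, v)" by (cases x)
  have "refs (stcode p v) \<subseteq> refs p \<union> rref B ` (meths v - Stat)" by (rule stcode_refs)
  then show ?case using Cons x by auto
qed auto

lemma rl_map_of: "j < length tau \<Longrightarrow> odd j \<Longrightarrow> wt (mval (tau ! j)) a \<Longrightarrow> map_of (rl a) (Suc j) = Some (mval (tau ! j))"
proof -
  assume a: "j < length tau" "odd j" "wt (mval (tau ! j)) a"
  have d: "distinct (map fst (rl a))" unfolding rl_def by (simp add: distinct_map inj_on_def)
  have "(Suc j, mval (tau ! j)) \<in> set (rl a)" unfolding rl_def using a by auto
  then show ?thesis by (rule map_of_is_SomeI[OF d])
qed

lemma rl_set: "(c, v) \<in> set (rl a) \<Longrightarrow> wt v a \<and> (\<exists>j<length tau. v = mval (tau ! j))"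
  unfolding rl_def by auto

lemma rl_names: "(\<Union>(c, v)\<in>set (rl a). meths v) \<subseteq> allnames"
  unfolding rl_def allnames_def by auto

end


context cl begin

lemma LOOP_wt: "wt (LOOP b) b"
proof -
  have "wt (MethT (loopname K b)) (TArrow TUnit b)" using wt_meth[of "loopname K b"] by simp
  then show ?thesis unfolding LOOP_def by (rule wt_app) (rule wt_unit)
qed

lemma CALLT_wt: "wt v (argty f) \<Longrightarrow> wt (CALLT f v) (resty f)"
proof -
  assume w: "wt v (argty f)"
  have tv: "wt (tr v) (argty f)" using tr_wt[OF w] .
  show ?thesis
  proof (cases "f \<in> Stat")
    case True
    then show ?thesis unfolding CALLT_def using wt_app[OF wt_meth[of f] tv] by simp
  next
    case False
    let ?g = "vG (TArrow (argty f) (resty f))"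
    have d: "wt (Deref (rref B f)) (varty ?g)" using wt_deref[of "rref B f"] by simp
    have "wt (VarT ?g) (TArrow (argty f) (resty f))" using wt_var[of ?g] by simp
    then have "wt (App (VarT ?g) (tr v)) (resty f)" using tv by (rule wt_app)
    then show ?thesis unfolding CALLT_def using False wt_let[OF d] by simp
  qed
qed

lemma REST_wt: "wt (REST f b) b"
proof -
  have "wt (stchain (VarT (vZ (resty f))) (rl (resty f))) TUnit"
    by (rule stchain_wt[of _ "resty f"]) (auto dest: rl_set intro: wt_var[of "vZ (resty f)", simplified])
  then show ?thesis unfolding REST_def using LOOP_wt by (auto intro: wt_pair wt_snd)
qed

lemma wt_cnt_assign: "wt (Assign (cnt B) (IntT i)) TUnit"
  by (rule wt_assign) (auto intro: wt_int)

lemma wt_cond: "wt (BinOp Equal (Deref (cnt B)) (IntT i)) TInt"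
  by (rule wt_op) (auto intro: wt_deref[of "cnt B", simplified] wt_int)

lemma ACT_wt: "wt (ACT b i) b"
proof (cases "tau ! i")
  case (Call f v)
  show ?thesis
  proof (cases "is_val v \<and> wt v (argty f)")
    case True
    have "wt (Let (vZ (resty f)) (CALLT f v) (REST f b)) b"
      using CALLT_wt[of v f] True REST_wt by (auto intro: wt_let)
    then have "wt (Seq (Assign (cnt B) (IntT (int i + 2))) (Let (vZ (resty f)) (CALLT f v) (REST f b))) b"
      by (rule wt_snd[OF wt_pair[OF wt_cnt_assign]])
    then show ?thesis unfolding ACT_def using Call True by simp
  next
    case False then show ?thesis unfolding ACT_def using Call LOOP_wt by auto
  qed
next
  case (Ret m v)
  show ?thesis
  proof (cases "is_val v \<and> wt v b")
    case True
    then have "wt (tr v) b" using tr_wt by blast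
    then have "wt (Seq (Assign (cnt B) (IntT (int i + 2))) (tr v)) b"
      by (rule wt_snd[OF wt_pair[OF wt_cnt_assign]])
    then show ?thesis unfolding ACT_def using Ret True by simp
  next
    case False then show ?thesis unfolding ACT_def using Ret LOOP_wt by auto
  qed
qed

lemma disp_wt: "wt (disp b is) b"
proof (induct "is")
  case Nil then show ?case using LOOP_wt by simp
next
  case (Cons i "is") then show ?case using wt_if[OF wt_cond ACT_wt] by simp
qed

lemma DISP_wt: "wt (DISP b) b"
  unfolding DISP_def by (rule disp_wt)

lemma BODY_wt: "wt (BODY m) (resty m)"
proof -
  have "wt (stchain (VarT (vY (argty m))) (rl (argty m))) TUnit"
    by (rule stchain_wt[of _ "argty m"]) (auto dest: rl_set intro: wt_var[of "vY (argty m)", simplified])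
  then show ?thesis unfolding BODY_def using LOOP_wt by (auto intro: wt_pair wt_snd)
qed

lemma LOOP_props[simp]: "fv (LOOP b) = {}" "\<not> has_box (LOOP b)" "\<not> has_assert (LOOP b)"
   "meths (LOOP b) = {loopname K b}" "refs (LOOP b) = {}"
  by (simp_all add: LOOP_def)

lemma tau_names: "i < length tau \<Longrightarrow> insert (mname (tau ! i)) (meths (mval (tau ! i))) \<subseteq> allnames"
  unfolding allnames_def by auto

lemma CALLT_props: "is_val v \<Longrightarrow> fv (CALLT f v) = {} \<and> \<not> has_box (CALLT f v) \<and> \<not> has_assert (CALLT f v)
   \<and> meths (CALLT f v) \<subseteq> (meths v \<union> {f}) \<inter> Stat \<and> refs (CALLT f v) \<subseteq> rref B ` ((meths v \<union> {f}) - Stat)"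
  using tr_props[of v] unfolding CALLT_def by auto

lemma REST_props: "fv (REST f b) \<subseteq> {vZ (resty f)} \<and> \<not> has_box (REST f b) \<and> \<not> has_assert (REST f b)
   \<and> meths (REST f b) \<subseteq> {loopname K b} \<and> refs (REST f b) \<subseteq> insert (cnt B) (rref B ` (allnames - Stat))"
proof -
  have "refs (stchain (VarT (vZ (resty f))) (rl (resty f))) \<subseteq> insert (cnt B) (rref B ` (allnames - Stat))"
    using stchain_refs[of "VarT (vZ (resty f))" "rl (resty f)"] rl_names[of "resty f"] by auto
  then show ?thesis unfolding REST_def
    using stchain_fv[of "VarT (vZ (resty f))" "rl (resty f)"] stchain_box[of "VarT (vZ (resty f))" "rl (resty f)"]
      stchain_assert[of "VarT (vZ (resty f))" "rl (resty f)"] stchain_meths[of "VarT (vZ (resty f))" "rl (resty f)"]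
    by auto
qed

lemma ACT_props: "i < length tau \<Longrightarrow> fv (ACT b i) = {} \<and> \<not> has_box (ACT b i) \<and> \<not> has_assert (ACT b i)
   \<and> meths (ACT b i) \<subseteq> insert (loopname K b) Stat \<and> refs (ACT b i) \<subseteq> insert (cnt B) (rref B ` (allnames - Stat))"
proof (cases "tau ! i")
  case (Call f v)
  assume i: "i < length tau"
  have nm: "meths v \<union> {f} \<subseteq> allnames" using tau_names[OF i] Call by auto
  show ?thesis
  proof (cases "is_val v \<and> wt v (argty f)")
    case True
    have r1: "refs (CALLT f v) \<subseteq> rref B ` (allnames - Stat)"
      using CALLT_props[of v f] True nm by blast
    have m1: "meths (CALLT f v) \<subseteq> Stat" using CALLT_props[of v f] True by blast
    then show ?thesis unfolding ACT_def using Call CALLT_props[of v f] REST_props[of f b] True r1 m1 by auto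
  next
    case False then show ?thesis unfolding ACT_def using Call by auto
  qed
next
  case (Ret m v)
  assume i: "i < length tau"
  have nm: "meths v \<subseteq> allnames" using tau_names[OF i] Ret by auto
  show ?thesis
  proof (cases "is_val v \<and> wt v b")
    case True
    have r1: "refs (tr v) \<subseteq> rref B ` (allnames - Stat)"
      using tr_props[of v] True nm by blast
    then show ?thesis unfolding ACT_def using Ret tr_props[of v] nm True by auto
  next
    case False then show ?thesis unfolding ACT_def using Ret by auto
  qed
qed

lemma disp_props: "\<forall>i\<in>set is. i < length tau \<Longrightarrow> fv (disp b is) = {} \<and> \<not> has_box (disp b is) \<and> \<not> has_assert (disp b is)
   \<and> meths (disp b is) \<subseteq> insert (loopname K b) Stat \<and> refs (disp b is) \<subseteq> insert (cnt B) (rref B ` (allnames - Stat))"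
proof (induct "is")
  case (Cons i "is") then show ?case using ACT_props[of i b] by auto
qed auto

lemma DISP_props: "fv (DISP b) = {} \<and> \<not> has_box (DISP b) \<and> \<not> has_assert (DISP b)
   \<and> meths (DISP b) \<subseteq> insert (loopname K b) Stat \<and> refs (DISP b) \<subseteq> insert (cnt B) (rref B ` (allnames - Stat))"
  unfolding DISP_def by (rule disp_props) auto

lemma BODY_props: "fv (BODY m) \<subseteq> {vY (argty m)} \<and> \<not> has_box (BODY m) \<and> \<not> has_assert (BODY m)
   \<and> meths (BODY m) \<subseteq> {loopname K (resty m)} \<and> refs (BODY m) \<subseteq> insert (cnt B) (rref B ` (allnames - Stat))"
proof -
  have "refs (stchain (VarT (vY (argty m))) (rl (argty m))) \<subseteq> insert (cnt B) (rref B ` (allnames - Stat))"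
    using stchain_refs[of "VarT (vY (argty m))" "rl (argty m)"] rl_names[of "argty m"] by auto
  then show ?thesis unfolding BODY_def
    using stchain_fv[of "VarT (vY (argty m))" "rl (argty m)"] stchain_box[of "VarT (vY (argty m))" "rl (argty m)"]
      stchain_assert[of "VarT (vY (argty m))" "rl (argty m)"] stchain_meths[of "VarT (vY (argty m))" "rl (argty m)"]
    by auto
qed

lemma subst_DISP: "subst x u (DISP b) = DISP b"
  using DISP_props subst_nofv by blast

lemma subst_LOOP[simp]: "subst x u (LOOP b) = LOOP b"
  by (simp add: LOOP_def)

lemma subst_BODY: "subst (vY (argty m)) u (BODY m) = Seq (stchain u (rl (argty m))) (LOOP (resty m))"
  unfolding BODY_def by (simp add: subst_stchain)

lemma subst_REST: "subst (vZ (resty f)) u (REST f b) = Seq (stchain u (rl (resty f))) (LOOP b)"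
  unfolding REST_def by (simp add: subst_stchain)

lemma disp_steps:
  assumes "S (cnt B) = Some (IntT (int c))" "c \<in> set is" "ectx_ok E"
  shows "isteps (PC Es (fill E (disp b is)) R S P A k) (PC Es (fill E (ACT b c)) R S P A k)"
  using assms(2)
proof (induct "is")
  case Nil then show ?case by simp
next
  case (Cons i "is")
  let ?C = "BinOp Equal (Deref (cnt B)) (IntT (int i))"
  have ev: "sev S ?C = Some (IntT (if c = i then 1 else 0), S)" using assms(1) by simp
  have a: "isteps (PC Es (fill E (If ?C (ACT b i) (disp b is))) R S P A k)
                  (PC Es (fill E (If (IntT (if c = i then 1 else 0)) (ACT b i) (disp b is))) R S P A k)"
    using sev_steps[OF ev, of "ecomp E (EIf Hole (ACT b i) (disp b is))"] assms(3) by simp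
  show ?case
  proof (cases "c = i")
    case True
    have b: "isteps (PC Es (fill E (If (IntT 1) (ACT b i) (disp b is))) R S P A k)
                    (PC Es (fill E (ACT b i)) R S P A k)"
      using assms(3) by (auto intro!: step_ctx h_if1)
    show ?thesis using isteps_trans[OF a] b True by simp
  next
    case False
    have b: "isteps (PC Es (fill E (If (IntT 0) (ACT b i) (disp b is))) R S P A k)
                    (PC Es (fill E (disp b is)) R S P A k)"
      using assms(3) by (auto intro!: step_ctx h_if0)
    have "c \<in> set is" using Cons False by simp
    then show ?thesis using isteps_trans[OF isteps_trans[OF a] Cons(1)] b False by simp
  qed
qed

lemma DISP_steps:
  assumes "S (cnt B) = Some (IntT (int c))" "c < length tau" "even c" "ectx_ok E"
  shows "isteps (PC Es (fill E (DISP b)) R S P A k) (PC Es (fill E (ACT b c)) R S P A k)"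
  unfolding DISP_def by (rule disp_steps) (use assms in auto)

end


fun good :: "ectx \<Rightarrow> bool" where
  "good Hole = True"
| "good (EBox E) = good E"
| "good (ESnd E) = (case E of EPairR v E' \<Rightarrow> v = UnitT \<and> good E' | _ \<Rightarrow> False)"
| "good _ = False"

fun nbox :: "ectx \<Rightarrow> nat" where
  "nbox Hole = 0"
| "nbox (EBox E) = Suc (nbox E)"
| "nbox (EAssert E) = nbox E"
| "nbox (EAssign r E) = nbox E"
| "nbox (EOpL op E N) = nbox E"
| "nbox (EOpR op v E) = nbox E"
| "nbox (EPairL E N) = nbox E"
| "nbox (EPairR v E) = nbox E"
| "nbox (EFst E) = nbox E"
| "nbox (ESnd E) = nbox E"
| "nbox (EApp m E) = nbox E"
| "nbox (ELet x E N) = nbox E"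
| "nbox (EIf E N1 N0) = nbox E"

lemma nbox_ecomp[simp]: "nbox (ecomp E E') = nbox E + nbox E'"
  by (induct E) auto

lemma good_ok: "good E \<Longrightarrow> ectx_ok E"
  by (induct E rule: good.induct) (auto split: ectx.splits)

lemma good_ecomp: "good E \<Longrightarrow> good E' \<Longrightarrow> good (ecomp E E')"
  by (induct E rule: good.induct) (auto split: ectx.splits)

lemma good_simps[simp]: "good (EBox Hole)" "good (ESnd (EPairR UnitT E)) = good E"
  by simp_all

lemma bubble:
  "good E \<Longrightarrow> is_val v \<Longrightarrow> ectx_ok E0 \<Longrightarrow>
   isteps (PC Es (fill E0 (fill E v)) R S P A (nbox E + k0)) (PC Es (fill E0 v) R S P A k0)"
proof (induct E arbitrary: E0 k0 rule: good.induct)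
  case 1 then show ?case by (auto intro: ctrace.intros)
next
  case (2 E)
  have a: "isteps (PC Es (fill (ecomp E0 (EBox Hole)) (fill E v)) R S P A (nbox E + Suc k0))
                  (PC Es (fill (ecomp E0 (EBox Hole)) v) R S P A (Suc k0))"
    using 2(1)[of "ecomp E0 (EBox Hole)" "Suc k0"] 2(2-) by simp
  have b: "isteps (PC Es (fill E0 (Box v)) R S P A (Suc k0)) (PC Es (fill E0 v) R S P A k0)"
    using 2 by (auto intro!: step_ctx h_box)
  show ?case using isteps_trans[OF _ b] a by simp
next
  case (3 E)
  then obtain E' where e: "E = EPairR UnitT E'" "good E'" by (auto split: ectx.splits)
  have a: "isteps (PC Es (fill (ecomp E0 (ESnd (EPairR UnitT Hole))) (fill E' v)) R S P A (nbox E' + k0))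
                  (PC Es (fill (ecomp E0 (ESnd (EPairR UnitT Hole))) v) R S P A k0)"
    using 3(1)[OF e(1) e(2), of "ecomp E0 (ESnd (EPairR UnitT Hole))" k0] e 3(3-) by simp
  have b: "isteps (PC Es (fill E0 (Snd (Pair UnitT v))) R S P A k0) (PC Es (fill E0 v) R S P A k0)"
    using 3 by (auto intro!: step_ctx h_snd)
  show ?case using isteps_trans[OF _ b] a e by simp
qed auto


lemma mv_trace: "isteps c c1 \<Longrightarrow> cstep c1 (Some a) c2 \<Longrightarrow> isteps c2 c' \<Longrightarrow> ctrace c [a] c'"
  using ctrace_trans[of c "[]" c1 "[a]" c'] by (auto intro: ctrace.intros)

fun fbox :: "frame list \<Rightarrow> nat" where
  "fbox [] = 0"
| "fbox (FCtx f E # Es) = nbox E + fbox Es"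
| "fbox (FNum m l # Es) = fbox Es"

lemma call_step:
  assumes "ectx_ok E" "R m = Some (x, M)" "is_val v"
  shows "isteps (PC Es (fill E (App (MethT m) v)) R S P A k) (PC Es (fill E (Box (subst x v M))) R S P A (Suc k))"
  using assms by (auto intro!: step_ctx h_call)

lemma let_step:
  assumes "ectx_ok E" "is_val v"
  shows "isteps (PC Es (fill E (Let x v M)) R S P A k) (PC Es (fill E (subst x v M)) R S P A k)"
  using assms by (auto intro!: step_ctx h_let)

locale clsim = cl +
  fixes Rc :: repo
  assumes Rc_pub: "\<And>m. m \<in> A0 \<union> F \<Longrightarrow> Rc m = Some (vY (argty m), BODY m)"
    and Rc_loop: "\<And>b. b \<in> set tys \<Longrightarrow> Rc (loopname K b) = Some (vW, DISP b)"
    and Rc_names: "dom Rc \<inter> allnames \<subseteq> A0 \<union> F"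
begin

lemma F_props: "F \<subseteq> AF" "F \<inter> A0 = {}" "F \<subseteq> allnames"
  unfolding F_def by auto

lemma mfn: "n < length tau \<Longrightarrow> MF P0 A0 D AF tau n"
  using mf unfolding A0_def P0_def by auto

lemma tys_mem: "TUnit \<in> set tys" "m \<in> A0 \<union> F \<Longrightarrow> resty m \<in> set tys"
  unfolding tys_def using Fl by (auto simp: A0_def)

lemma DAF': "D \<inter> AF = {}" using DAF .
lemma A0AF': "A0 \<subseteq> AF" using A0AF unfolding A0_def .
lemma P0D': "P0 \<subseteq> D" using P0D unfolding P0_def .

fun fr :: "ty \<Rightarrow> frame list \<Rightarrow> (nat \<times> meth) list \<Rightarrow> bool" where
  "fr b [] [] = (b = TUnit)"
| "fr b (FNum m l # Es) ((j, m') # st) = (odd j \<and> m' = m \<and> b = resty m \<and> b \<in> set tys \<and> (\<exists>b'. fr b' Es st))"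
| "fr b (FCtx f E # Es) ((i, f') # st) = (even i \<and> f' = f \<and> (\<exists>Eg. E = ecomp Eg (CALLCTX f b) \<and> good Eg) \<and> fr b Es st)"
| "fr b _ _ = False"

lemma fr_tys: "fr b Es st \<Longrightarrow> b \<in> set tys"
  by (induct b Es st rule: fr.induct) (auto simp: tys_mem)

lemma fr_odd: "fr b Es ((j, m) # st) \<Longrightarrow> odd j \<Longrightarrow>
   \<exists>l Es'. Es = FNum m l # Es' \<and> b = resty m \<and> b \<in> set tys \<and> (\<exists>b'. fr b' Es' st)"
  by (cases Es; cases "hd Es") auto

lemma fr_even: "fr b Es ((i, f) # st) \<Longrightarrow> even i \<Longrightarrow>
   \<exists>Eg Es'. Es = FCtx f (ecomp Eg (CALLCTX f b)) # Es' \<and> good Eg \<and> fr b Es' st"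
  by (cases Es; cases "hd Es") auto

definition SI :: "nat \<Rightarrow> nat \<Rightarrow> store \<Rightarrow> bool" where
  "SI c n S \<longleftrightarrow> S (cnt B) = Some (IntT (int c)) \<and>
     (\<forall>d. d \<in> vnP (take n tau) \<and> d \<notin> Stat \<longrightarrow> S (rref B d) = Some (MethT d))"

definition PCI :: "nat \<Rightarrow> meth set \<Rightarrow> meth set \<Rightarrow> bool" where
  "PCI n Pc Ac \<longleftrightarrow> A0 \<union> (F \<inter> vnO (take n tau)) \<subseteq> Pc \<and> P0 \<union> (vnP (take n tau) - dom Rc) \<subseteq> Ac"

definition ready :: "nat \<Rightarrow> config \<Rightarrow> bool" where
  "ready n c \<longleftrightarrow> (\<exists>Es E b S Pc Ac. c = PC Es (fill E (DISP b)) Rc S Pc Ac (nbox E + fbox Es)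
     \<and> good E \<and> fr b Es (stk (take n tau)) \<and> SI n n S \<and> PCI n Pc Ac)"

definition wait :: "nat \<Rightarrow> config \<Rightarrow> bool" where
  "wait n c \<longleftrightarrow> (\<exists>Es l S Pc Ac b. c = OC Es l Rc S Pc Ac (fbox Es)
     \<and> fr b Es (stk (take n tau)) \<and> SI (Suc n) n S \<and> PCI n Pc Ac)"

lemma take_Suc_tau: "n < length tau \<Longrightarrow> take (Suc n) tau = take n tau @ [tau ! n]"
  by (simp add: take_Suc_conv_app_nth)

lemma len_take: "n < length tau \<Longrightarrow> length (take n tau) = n" by simp

lemma ovals_names:
  assumes n: "n < length tau" "even n" and mv: "meths v \<subseteq> AF \<union> P0 \<union> vnP (take n tau)"
    and vin: "meths v \<subseteq> allnames"
  shows "\<forall>d\<in>meths v. d \<notin> Stat \<longrightarrow> d \<in> vnP (take n tau)"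
  using mv vin unfolding Stat_def F_def by blast

lemma rvals_ok:
  assumes mv: "meths u \<subseteq> D \<union> A0 \<union> vnO (take n tau)" and vin: "meths u \<subseteq> allnames"
    and pci: "PCI n Pc Ac"
  shows "meths u \<inter> dom Rc \<subseteq> Pc"
proof
  fix x assume x: "x \<in> meths u \<inter> dom Rc"
  then have "x \<in> A0 \<union> F" using Rc_names vin by blast
  then show "x \<in> Pc"
  proof
    assume "x \<in> A0" then show ?thesis using pci unfolding PCI_def by blast
  next
    assume xF: "x \<in> F"
    then have "x \<notin> D" "x \<notin> A0" using F_props DAF' by blast+
    then have "x \<in> vnO (take n tau)" using mv x by blast
    then show ?thesis using pci xF unfolding PCI_def by blast
  qed
qed

lemma tau_val_names: "n < length tau \<Longrightarrow> tau ! n = Call f v \<Longrightarrow> meths v \<subseteq> allnames \<and> f \<in> allnames"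
  using tau_names[of n] by auto
lemma tau_val_names2: "n < length tau \<Longrightarrow> tau ! n = Ret f v \<Longrightarrow> meths v \<subseteq> allnames \<and> f \<in> allnames"
  using tau_names[of n] by auto

end


context clsim begin

lemma CALLCTX_ok: "ectx_ok (CALLCTX f b)" by (simp add: CALLCTX_def)
lemma nbox_CALLCTX[simp]: "nbox (CALLCTX f b) = 0" by (simp add: CALLCTX_def)

lemma step_even:
  assumes n: "n < length tau" "even n" and r: "ready n c"
  shows "\<exists>c'. ctrace c [tau ! n] c' \<and> wait (Suc n) c'"
proof -
  obtain Es E b S Pc Ac where c: "c = PC Es (fill E (DISP b)) Rc S Pc Ac (nbox E + fbox Es)"
    and g: "good E" and f: "fr b Es (stk (take n tau))" and si: "SI n n S" and pci: "PCI n Pc Ac"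
    using r unfolding ready_def by blast
  let ?k = "nbox E + fbox Es"
  have ok: "ectx_ok E" using g good_ok by blast
  have mfn: "MF P0 A0 D AF tau n" using mfn n by blast
  have s1: "isteps c (PC Es (fill E (ACT b n)) Rc S Pc Ac ?k)"
    unfolding c by (rule DISP_steps) (use si n ok in \<open>auto simp: SI_def\<close>)
  have vnP_eq: "vnP (take (Suc n) tau) = vnP (take n tau)" using n by (simp add: take_Suc_tau vnP_snoc)
  have vnO_eq: "vnO (take (Suc n) tau) = vnO (take n tau) \<union> meths (mval (tau ! n))"
    using n by (simp add: take_Suc_tau vnO_snoc)
  show ?thesis
  proof (cases "tau ! n")
    case (Call f v)
    from mfn n Call have mf: "f \<in> P0 \<union> vnP (take n tau)" "f \<in> D" "is_val v" "wt v (argty f)"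
      "meths v \<subseteq> AF \<union> P0 \<union> vnP (take n tau)" unfolding MF_def Let_def by auto
    have nm: "meths v \<subseteq> allnames" "f \<in> allnames" using tau_val_names[OF n(1) Call] by auto
    let ?z = "vZ (resty f)"
    have act: "ACT b n = Seq (Assign (cnt B) (IntT (int n + 2))) (Let ?z (CALLT f v) (REST f b))"
      unfolding ACT_def using Call mf by simp
    let ?S1 = "S(cnt B \<mapsto> IntT (int n + 2))"
    let ?E1 = "ecomp E (CALLCTX f b)"
    have ok1: "ectx_ok ?E1" using ok CALLCTX_ok by simp
    have s2: "isteps (PC Es (fill E (ACT b n)) Rc S Pc Ac ?k) (PC Es (fill ?E1 (CALLT f v)) Rc ?S1 Pc Ac ?k)"
    proof -
      have "sev S (Assign (cnt B) (IntT (int n + 2))) = Some (UnitT, ?S1)" by simp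
      from sev_steps[OF this, of "ecomp E (ESnd (EPairL Hole (Let ?z (CALLT f v) (REST f b))))" Es Rc Pc Ac ?k]
      show ?thesis using ok unfolding act CALLCTX_def by simp
    qed
    have nv: "\<forall>d\<in>meths v. d \<notin> Stat \<longrightarrow> ?S1 (rref B d) = Some (MethT d)"
      using ovals_names[OF n mf(5) nm(1)] si unfolding SI_def by auto
    have nf: "f \<notin> Stat \<Longrightarrow> ?S1 (rref B f) = Some (MethT f)"
    proof -
      assume "f \<notin> Stat"
      then have "f \<in> vnP (take n tau)" using mf(1) unfolding Stat_def by auto
      then show ?thesis using si \<open>f \<notin> Stat\<close> unfolding SI_def by auto
    qed
    have trv: "sev ?S1 (tr v) = Some (v, ?S1)" using tr_sev[OF mf(3) nv] .
    have s3: "isteps (PC Es (fill ?E1 (CALLT f v)) Rc ?S1 Pc Ac ?k) (PC Es (fill ?E1 (App (MethT f) v)) Rc ?S1 Pc Ac ?k)"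
    proof (cases "f \<in> Stat")
      case True
      then show ?thesis unfolding CALLT_def using sev_steps[OF trv, of "ecomp ?E1 (EApp f Hole)"] ok1 by simp
    next
      case False
      let ?g = "vG (TArrow (argty f) (resty f))"
      have ct: "CALLT f v = Let ?g (Deref (rref B f)) (App (VarT ?g) (tr v))" unfolding CALLT_def using False by simp
      have d: "sev ?S1 (Deref (rref B f)) = Some (MethT f, ?S1)" using nf[OF False] by simp
      have a: "isteps (PC Es (fill ?E1 (CALLT f v)) Rc ?S1 Pc Ac ?k)
                      (PC Es (fill ?E1 (Let ?g (MethT f) (App (VarT ?g) (tr v)))) Rc ?S1 Pc Ac ?k)"
        unfolding ct using sev_steps[OF d, of "ecomp ?E1 (ELet ?g Hole (App (VarT ?g) (tr v)))"] ok1 by simp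
      have b: "isteps (PC Es (fill ?E1 (Let ?g (MethT f) (App (VarT ?g) (tr v)))) Rc ?S1 Pc Ac ?k)
                      (PC Es (fill ?E1 (App (MethT f) (tr v))) Rc ?S1 Pc Ac ?k)"
        using let_step[OF ok1, where v = "MethT f" and x = "vG (TArrow (argty f) (resty f))"
            and M = "App (VarT (vG (TArrow (argty f) (resty f)))) (tr v)"] subst_tr[OF mf(3)] by simp
      have cc: "isteps (PC Es (fill ?E1 (App (MethT f) (tr v))) Rc ?S1 Pc Ac ?k)
                      (PC Es (fill ?E1 (App (MethT f) v)) Rc ?S1 Pc Ac ?k)"
        using sev_steps[OF trv, of "ecomp ?E1 (EApp f Hole)"] ok1 by simp
      show ?thesis using isteps_trans[OF isteps_trans[OF a b] cc] .
    qed
    have fA: "f \<in> Ac"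
    proof (cases "f \<in> P0")
      case True then show ?thesis using pci unfolding PCI_def by blast
    next
      case False
      then have fv: "f \<in> vnP (take n tau)" using mf(1) by blast
      have "f \<notin> dom Rc"
      proof
        assume "f \<in> dom Rc"
        then have "f \<in> A0 \<union> F" using Rc_names nm(2) by blast
        then have "f \<in> AF" using F_props A0AF' by blast
        then show False using mf(2) DAF' by blast
      qed
      then show ?thesis using fv pci unfolding PCI_def by blast
    qed
    have s4: "cstep (PC Es (fill ?E1 (App (MethT f) v)) Rc ?S1 Pc Ac ?k) (Some (Call f v))
                    (OC (FCtx f ?E1 # Es) 0 Rc ?S1 (Pc \<union> (meths v \<inter> dom Rc)) Ac ?k)"
      by (rule c_pq) (use ok1 mf(3) fA in auto)
    have w: "wait (Suc n) (OC (FCtx f ?E1 # Es) 0 Rc ?S1 (Pc \<union> (meths v \<inter> dom Rc)) Ac ?k)"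
      unfolding wait_def
    proof (intro exI conjI)
      show "OC (FCtx f ?E1 # Es) 0 Rc ?S1 (Pc \<union> (meths v \<inter> dom Rc)) Ac ?k =
            OC (FCtx f ?E1 # Es) 0 Rc ?S1 (Pc \<union> (meths v \<inter> dom Rc)) Ac (fbox (FCtx f ?E1 # Es))" by simp
      show "fr b (FCtx f ?E1 # Es) (stk (take (Suc n) tau))"
        using f g n Call by (auto simp: take_Suc_tau)
      show "SI (Suc (Suc n)) (Suc n) ?S1"
        using si vnP_eq unfolding SI_def by auto
      show "PCI (Suc n) (Pc \<union> (meths v \<inter> dom Rc)) Ac"
      proof -
        have "F \<subseteq> dom Rc" using Rc_pub by blast
        then show ?thesis using pci vnP_eq vnO_eq Call unfolding PCI_def by auto
      qed
    qed
    have "ctrace c [Call f v] (OC (FCtx f ?E1 # Es) 0 Rc ?S1 (Pc \<union> (meths v \<inter> dom Rc)) Ac ?k)"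
      by (rule mv_trace[OF isteps_trans[OF s1 isteps_trans[OF s2 s3]] s4]) (rule ct_refl)
    then show ?thesis using w Call by auto
  next
    case (Ret m v)
    from mfn n Ret obtain j st where mf: "stk (take n tau) = (j, m) # st" "odd j" "is_val v" "wt v (resty m)"
      "meths v \<subseteq> AF \<union> P0 \<union> vnP (take n tau)" unfolding MF_def Let_def by auto
    have nm: "meths v \<subseteq> allnames" using tau_val_names2[OF n(1) Ret] by auto
    obtain l Es' b' where es: "Es = FNum m l # Es'" "b = resty m" "fr b' Es' st"
      using fr_odd[OF f[unfolded mf(1)] mf(2)] by blast
    have act: "ACT b n = Seq (Assign (cnt B) (IntT (int n + 2))) (tr v)"
      unfolding ACT_def using Ret mf es by simp
    let ?S1 = "S(cnt B \<mapsto> IntT (int n + 2))"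
    have nv: "\<forall>d\<in>meths v. d \<notin> Stat \<longrightarrow> ?S1 (rref B d) = Some (MethT d)"
      using ovals_names[OF n mf(5) nm] si unfolding SI_def by auto
    have trv: "sev ?S1 (tr v) = Some (v, ?S1)" using tr_sev[OF mf(3) nv] .
    have sv: "sev S (ACT b n) = Some (v, ?S1)" unfolding act using trv by simp
    have s2: "isteps (PC Es (fill E (ACT b n)) Rc S Pc Ac ?k) (PC Es (fill E v) Rc ?S1 Pc Ac ?k)"
      using sev_steps[OF sv ok] .
    have s3: "isteps (PC Es (fill E v) Rc ?S1 Pc Ac ?k) (PC Es v Rc ?S1 Pc Ac (fbox Es))"
      using bubble[OF g mf(3), of Hole Es Rc ?S1 Pc Ac "fbox Es"] by simp
    have s4: "cstep (PC Es v Rc ?S1 Pc Ac (fbox Es)) (Some (Ret m v))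
                    (OC Es' l Rc ?S1 (Pc \<union> (meths v \<inter> dom Rc)) Ac (fbox Es))"
      unfolding es(1) by (rule c_pa) (rule mf(3))
    have w: "wait (Suc n) (OC Es' l Rc ?S1 (Pc \<union> (meths v \<inter> dom Rc)) Ac (fbox Es))"
      unfolding wait_def
    proof (intro exI conjI)
      show "OC Es' l Rc ?S1 (Pc \<union> (meths v \<inter> dom Rc)) Ac (fbox Es) =
            OC Es' l Rc ?S1 (Pc \<union> (meths v \<inter> dom Rc)) Ac (fbox Es')" using es by simp
      show "fr b' Es' (stk (take (Suc n) tau))"
        using es mf n Ret by (auto simp: take_Suc_tau)
      show "SI (Suc (Suc n)) (Suc n) ?S1"
        using si vnP_eq unfolding SI_def by auto
      show "PCI (Suc n) (Pc \<union> (meths v \<inter> dom Rc)) Ac"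
      proof -
        have "F \<subseteq> dom Rc" using Rc_pub by blast
        then show ?thesis using pci vnP_eq vnO_eq Ret unfolding PCI_def by auto
      qed
    qed
    have "ctrace c [Ret m v] (OC Es' l Rc ?S1 (Pc \<union> (meths v \<inter> dom Rc)) Ac (fbox Es))"
      by (rule mv_trace[OF isteps_trans[OF s1 isteps_trans[OF s2 s3]] s4]) (rule ct_refl)
    then show ?thesis using w Ret by auto
  qed
qed

end


context clsim begin

lemma store_after:
  assumes si: "SI (Suc n) n S" and n: "n < length tau" "odd n" and u: "mval (tau ! n) = u" "is_val u"
  shows "SI (Suc n) (Suc n) (stupd S u)"
proof -
  have vn: "vnP (take (Suc n) tau) = vnP (take n tau) \<union> meths u"
    using n u by (simp add: take_Suc_tau vnP_snoc)
  show ?thesis unfolding SI_def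
  proof (intro conjI allI impI)
    show "stupd S u (cnt B) = Some (IntT (int (Suc n)))" using si by (simp add: SI_def)
    fix d assume d: "d \<in> vnP (take (Suc n) tau) \<and> d \<notin> Stat"
    show "stupd S u (rref B d) = Some (MethT d)"
      using d si vn stupd_rref[OF u(2), of S d] unfolding SI_def by auto
  qed
qed

lemma step_odd:
  assumes n: "n < length tau" "odd n" and w: "wait n c"
  shows "\<exists>c'. ctrace c [tau ! n] c' \<and> ready (Suc n) c'"
proof -
  obtain Es l S Pc Ac b where c: "c = OC Es l Rc S Pc Ac (fbox Es)"
    and f: "fr b Es (stk (take n tau))" and si: "SI (Suc n) n S" and pci: "PCI n Pc Ac"
    using w unfolding wait_def by blast
  have mfn: "MF P0 A0 D AF tau n" using mfn n by blast
  have vnO_eq: "vnO (take (Suc n) tau) = vnO (take n tau)" using n by (simp add: take_Suc_tau vnO_snoc)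
  have vnP_eq: "vnP (take (Suc n) tau) = vnP (take n tau) \<union> meths (mval (tau ! n))"
    using n by (simp add: take_Suc_tau vnP_snoc)
  have scnt: "S (cnt B) = Some (IntT (int (Suc n)))" using si by (simp add: SI_def)
  show ?thesis
  proof (cases "tau ! n")
    case (Call m u)
    from mfn n Call have mf: "m \<in> A0 \<union> vnO (take n tau)" "m \<in> AF" "is_val u" "wt u (argty m)"
      "meths u \<subseteq> D \<union> A0 \<union> vnO (take n tau)" unfolding MF_def Let_def by auto
    have nm: "meths u \<subseteq> allnames" "m \<in> allnames" using tau_val_names[OF n(1) Call] by auto
    have mAF: "m \<in> A0 \<union> F"
    proof (cases "m \<in> A0")
      case False then show ?thesis using mf(2) nm(2) unfolding F_def by blast
    qed simp
    have mP: "m \<in> Pc"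
    proof (cases "m \<in> A0")
      case True then show ?thesis using pci unfolding PCI_def by blast
    next
      case False
      then have "m \<in> F" "m \<in> vnO (take n tau)" using mAF mf(1) by auto
      then show ?thesis using pci unfolding PCI_def by blast
    qed
    have Rm: "Rc m = Some (vY (argty m), BODY m)" using Rc_pub[OF mAF] .
    have ov: "o_val Rc Pc u (argty m)" unfolding o_val_def using mf(3,4) rvals_ok[OF mf(5) nm(1) pci] by simp
    let ?Ac' = "Ac \<union> (meths u - dom Rc)"
    let ?Es = "FNum m (l + 1) # Es"
    have s1: "cstep c (Some (Call m u)) (PC ?Es (App (MethT m) u) Rc S Pc ?Ac' (fbox Es))"
      unfolding c by (rule c_oq) (use mP Rm ov in auto)
    let ?bm = "resty m"
    have bt: "?bm \<in> set tys" using tys_mem(2)[OF mAF] .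
    have s2: "isteps (PC ?Es (App (MethT m) u) Rc S Pc ?Ac' (fbox Es))
                     (PC ?Es (Box (Seq (stchain u (rl (argty m))) (LOOP ?bm))) Rc S Pc ?Ac' (Suc (fbox Es)))"
      using call_step[where E = Hole and R = Rc and m = m and x = "vY (argty m)" and M = "BODY m" and v = u, OF _ Rm mf(3)]
        subst_BODY[of m u] by simp
    have mo: "map_of (rl (argty m)) (Suc n) = Some u" using rl_map_of[OF n(1) n(2)] Call mf(4) by simp
    have sc: "sev S (stchain u (rl (argty m))) = Some (UnitT, stupd S u)"
      by (rule stchain_sev[where S = S and c = "Suc n" and v = u, OF scnt mo]) (simp add: sev_val mf(3))
    let ?S' = "stupd S u"
    have s3: "isteps (PC ?Es (Box (Seq (stchain u (rl (argty m))) (LOOP ?bm))) Rc S Pc ?Ac' (Suc (fbox Es)))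
                     (PC ?Es (Box (Seq UnitT (LOOP ?bm))) Rc ?S' Pc ?Ac' (Suc (fbox Es)))"
      using sev_steps[OF sc, of "EBox (ESnd (EPairL Hole (LOOP ?bm)))"] by simp
    have s4: "isteps (PC ?Es (Box (Seq UnitT (LOOP ?bm))) Rc ?S' Pc ?Ac' (Suc (fbox Es)))
                     (PC ?Es (Box (Seq UnitT (Box (DISP ?bm)))) Rc ?S' Pc ?Ac' (Suc (Suc (fbox Es))))"
      using call_step[where E = "EBox (ESnd (EPairR UnitT Hole))" and R = Rc and m = "loopname K (resty m)"
          and x = vW and M = "DISP (resty m)" and v = UnitT, OF _ Rc_loop[OF bt]] subst_DISP
      unfolding LOOP_def by simp
    let ?E = "EBox (ESnd (EPairR UnitT (EBox Hole)))"
    have r: "ready (Suc n) (PC ?Es (fill ?E (DISP ?bm)) Rc ?S' Pc ?Ac' (nbox ?E + fbox ?Es))"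
      unfolding ready_def
      apply (rule exI[where x="?Es"], rule exI[where x="?E"], rule exI[where x="?bm"], rule exI[where x="?S'"],
           rule exI[where x=Pc], rule exI[where x="?Ac'"])
    proof (intro conjI)
      show "good ?E" by simp
      show "fr ?bm ?Es (stk (take (Suc n) tau))"
        using f n Call bt by (auto simp: take_Suc_tau)
      show "SI (Suc n) (Suc n) ?S'" using store_after[OF si n] Call mf(3) by simp
      show "PCI (Suc n) Pc ?Ac'" using pci vnO_eq vnP_eq Call unfolding PCI_def by auto
    qed simp
    have "ctrace c [Call m u] (PC ?Es (fill ?E (DISP ?bm)) Rc ?S' Pc ?Ac' (nbox ?E + fbox ?Es))"
      using mv_trace[OF ct_refl s1 isteps_trans[OF s2 isteps_trans[OF s3 s4]]] by simp
    then show ?thesis using r Call by auto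
  next
    case (Ret f u)
    from mfn n Ret obtain i st where mf: "stk (take n tau) = (i, f) # st" "even i" "is_val u" "wt u (resty f)"
      "meths u \<subseteq> D \<union> A0 \<union> vnO (take n tau)" unfolding MF_def Let_def by auto
    have nm: "meths u \<subseteq> allnames" using tau_val_names2[OF n(1) Ret] by auto
    obtain Eg Es' where es: "Es = FCtx f (ecomp Eg (CALLCTX f b)) # Es'" "good Eg" "fr b Es' st"
      using fr_even[OF f[unfolded mf(1)] mf(2)] by blast
    have ov: "o_val Rc Pc u (resty f)" unfolding o_val_def using mf(3,4) rvals_ok[OF mf(5) nm pci] by simp
    let ?Ac' = "Ac \<union> (meths u - dom Rc)"
    let ?E1 = "ecomp Eg (CALLCTX f b)"
    let ?k = "nbox Eg + fbox Es'"
    have kk: "fbox Es = ?k" using es by simp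
    have s1: "cstep c (Some (Ret f u)) (PC Es' (fill ?E1 u) Rc S Pc ?Ac' ?k)"
      unfolding c es(1) using c_oa[OF ov, of "ecomp Eg (CALLCTX f b)" Es' l S Ac "fbox Es"] es by simp
    have okg: "ectx_ok Eg" using es(2) good_ok by blast
    let ?z = "vZ (resty f)"
    have s2: "isteps (PC Es' (fill ?E1 u) Rc S Pc ?Ac' ?k)
         (PC Es' (fill Eg (Seq UnitT (Seq (stchain u (rl (resty f))) (LOOP b)))) Rc S Pc ?Ac' ?k)"
      using let_step[of "ecomp Eg (ESnd (EPairR UnitT Hole))" u, OF _ mf(3), where x = ?z and M = "REST f b"]
        okg subst_REST[of f u b] unfolding CALLCTX_def by simp
    have mo: "map_of (rl (resty f)) (Suc n) = Some u" using rl_map_of[OF n(1) n(2)] Ret mf(4) by simp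
    have sc: "sev S (stchain u (rl (resty f))) = Some (UnitT, stupd S u)"
      by (rule stchain_sev[where S = S and c = "Suc n" and v = u, OF scnt mo]) (simp add: sev_val mf(3))
    let ?S' = "stupd S u"
    have s3: "isteps (PC Es' (fill Eg (Seq UnitT (Seq (stchain u (rl (resty f))) (LOOP b)))) Rc S Pc ?Ac' ?k)
         (PC Es' (fill Eg (Seq UnitT (Seq UnitT (LOOP b)))) Rc ?S' Pc ?Ac' ?k)"
      using sev_steps[OF sc, of "ecomp Eg (ESnd (EPairR UnitT (ESnd (EPairL Hole (LOOP b)))))"] okg by simp
    have bt: "b \<in> set tys" using fr_tys[OF f] .
    have s4: "isteps (PC Es' (fill Eg (Seq UnitT (Seq UnitT (LOOP b)))) Rc ?S' Pc ?Ac' ?k)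
         (PC Es' (fill Eg (Seq UnitT (Seq UnitT (Box (DISP b))))) Rc ?S' Pc ?Ac' (Suc ?k))"
      using call_step[where E = "ecomp Eg (ESnd (EPairR UnitT (ESnd (EPairR UnitT Hole))))" and R = Rc
          and m = "loopname K b" and x = vW and M = "DISP b" and v = UnitT, OF _ Rc_loop[OF bt]]
        subst_DISP okg unfolding LOOP_def by simp
    let ?E = "ecomp Eg (ESnd (EPairR UnitT (ESnd (EPairR UnitT (EBox Hole)))))"
    have r: "ready (Suc n) (PC Es' (fill ?E (DISP b)) Rc ?S' Pc ?Ac' (nbox ?E + fbox Es'))"
      unfolding ready_def
      apply (rule exI[where x="Es'"], rule exI[where x="?E"], rule exI[where x="b"], rule exI[where x="?S'"],
           rule exI[where x=Pc], rule exI[where x="?Ac'"])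
    proof (intro conjI)
      show "good ?E" using es(2) by (simp add: good_ecomp)
      show "fr b Es' (stk (take (Suc n) tau))"
        using es mf n Ret by (auto simp: take_Suc_tau)
      show "SI (Suc n) (Suc n) ?S'" using store_after[OF si n] Ret mf(3) by simp
      show "PCI (Suc n) Pc ?Ac'" using pci vnO_eq vnP_eq Ret unfolding PCI_def by auto
    qed simp
    have e: "nbox ?E + fbox Es' = Suc ?k" by simp
    have "ctrace c [Ret f u] (PC Es' (fill ?E (DISP b)) Rc ?S' Pc ?Ac' (nbox ?E + fbox Es'))"
      using mv_trace[OF ct_refl s1 isteps_trans[OF s2 isteps_trans[OF s3 s4]]] e by simp
    then show ?thesis using r Ret by auto
  qed
qed

lemma sim_init:
  assumes S0: "S0 (cnt B) = Some (IntT 0)" and pa: "A0 \<subseteq> Pc" "P0 \<subseteq> Ac"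
  shows "\<exists>c. isteps (PC [] (LOOP TUnit) Rc S0 Pc Ac 0) c \<and> ready 0 c"
proof -
  have s: "isteps (PC [] (LOOP TUnit) Rc S0 Pc Ac 0) (PC [] (Box (DISP TUnit)) Rc S0 Pc Ac (Suc 0))"
    using call_step[where E = Hole and R = Rc and m = "loopname K TUnit" and x = vW and M = "DISP TUnit"
        and v = UnitT, OF _ Rc_loop[OF tys_mem(1)]] subst_DISP unfolding LOOP_def by simp
  have "ready 0 (PC [] (fill (EBox Hole) (DISP TUnit)) Rc S0 Pc Ac (nbox (EBox Hole) + fbox []))"
    unfolding ready_def
    apply (rule exI[where x="[]"], rule exI[where x="EBox Hole"], rule exI[where x=TUnit], rule exI[where x=S0],
           rule exI[where x=Pc], rule exI[where x=Ac])
    using S0 pa by (auto simp: SI_def PCI_def)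
  then show ?thesis using s by auto
qed

lemma sim:
  assumes S0: "S0 (cnt B) = Some (IntT 0)" and pa: "A0 \<subseteq> Pc" "P0 \<subseteq> Ac"
  shows "n \<le> length tau \<Longrightarrow> \<exists>c. ctrace (PC [] (LOOP TUnit) Rc S0 Pc Ac 0) (take n tau) c
            \<and> (if even n then ready n c else wait n c)"
proof (induct n)
  case 0 then show ?case using sim_init[of S0 Pc Ac, OF assms] by auto
next
  case (Suc n)
  then obtain c where c: "ctrace (PC [] (LOOP TUnit) Rc S0 Pc Ac 0) (take n tau) c"
    "if even n then ready n c else wait n c" by auto
  have nl: "n < length tau" using Suc by simp
  have tk: "take (Suc n) tau = take n tau @ [tau ! n]" using take_Suc_tau[OF nl] .
  show ?case
  proof (cases "even n")
    case True
    then obtain c' where "ctrace c [tau ! n] c'" "wait (Suc n) c'" using step_even[OF nl True] c by auto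
    then show ?thesis using ctrace_trans[OF c(1)] tk True by auto
  next
    case False
    then obtain c' where "ctrace c [tau ! n] c'" "ready (Suc n) c'" using step_odd[OF nl] c by auto
    then show ?thesis using ctrace_trans[OF c(1)] tk False by auto
  qed
qed

lemma sim_full:
  assumes "S0 (cnt B) = Some (IntT 0)" "A0 \<subseteq> Pc" "P0 \<subseteq> Ac"
  shows "\<exists>c. ctrace (PC [] (LOOP TUnit) Rc S0 Pc Ac 0) tau c"
  using sim[of S0 Pc Ac "length tau", OF assms] by auto

end


definition upds :: "('a \<Rightarrow> 'k) \<Rightarrow> ('a \<Rightarrow> 'v) \<Rightarrow> ('k \<rightharpoonup> 'v) \<Rightarrow> 'a list \<Rightarrow> ('k \<rightharpoonup> 'v)" where
  "upds nm g R as = foldl (\<lambda>R a. R(nm a \<mapsto> g a)) R as"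

lemma upds_Nil[simp]: "upds nm g R [] = R" by (simp add: upds_def)
lemma upds_Cons[simp]: "upds nm g R (a # as) = upds nm g (R(nm a \<mapsto> g a)) as" by (simp add: upds_def)

lemma upds_other: "m \<notin> nm ` set as \<Longrightarrow> upds nm g R as m = R m"
  by (induct as arbitrary: R) auto

lemma upds_in: "inj_on nm (set as) \<Longrightarrow> a \<in> set as \<Longrightarrow> upds nm g R as (nm a) = Some (g a)"
proof (induct as arbitrary: R)
  case (Cons a' as)
  show ?case
  proof (cases "a \<in> set as")
    case True then show ?thesis using Cons by auto
  next
    case False
    then have "a = a'" using Cons by auto
    moreover have "nm a \<notin> nm ` set as" using Cons(2) False \<open>a = a'\<close> by (auto simp: inj_on_def)
    ultimately show ?thesis using upds_other[of "nm a" nm as g] by simp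
  qed
qed simp

lemma dom_upds: "dom (upds nm g R as) = dom R \<union> nm ` set as"
  by (induct as arbitrary: R) auto

lemma builds_absl: "builds N ds R S P (A \<union> set ms) res \<Longrightarrow> builds N (map Abstract ms @ ds) R S P A res"
proof (induct ms arbitrary: A)
  case (Cons m ms)
  have "builds N ds R S P (insert m A \<union> set ms) res" using Cons(2) by (simp add: insert_commute)
  then show ?case using Cons(1) by (auto intro: b_abs)
qed simp

lemma builds_publ: "builds N ds (upds (\<lambda>m. m) g R ms) S (P \<union> set ms) A res \<Longrightarrow>
   builds N (map (\<lambda>m. PublicM m (fst (g m)) (snd (g m))) ms @ ds) R S P A res"
proof (induct ms arbitrary: R P)
  case (Cons m ms)
  have "builds N ds (upds (\<lambda>m. m) g (R(m \<mapsto> g m)) ms) S (insert m P \<union> set ms) A res"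
    using Cons(2) by simp
  then have "builds N ds (upds (\<lambda>m. m) g (R(m \<mapsto> g m)) ms) S (insert m P \<union> set ms) A res" by simp
  from Cons(1)[OF this]
  have "builds N (map (\<lambda>m. PublicM m (fst (g m)) (snd (g m))) ms @ ds) (R(m \<mapsto> (fst (g m), snd (g m)))) S (insert m P) A res"
    by (simp add: fun_upd_def)
  from b_pub[OF this] show ?case by simp
qed simp

lemma builds_privl: "builds N ds (upds nm g R ms) S P A res \<Longrightarrow>
   builds N (map (\<lambda>m. PrivM (nm m) (fst (g m)) (snd (g m))) ms @ ds) R S P A res"
proof (induct ms arbitrary: R)
  case (Cons m ms)
  have "builds N ds (upds nm g (R(nm m \<mapsto> g m)) ms) S P A res"
    using Cons(2) by simp
  from Cons(1)[OF this]
  have "builds N (map (\<lambda>m. PrivM (nm m) (fst (g m)) (snd (g m))) ms @ ds) (R(nm m \<mapsto> (fst (g m), snd (g m)))) S P A res"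
    by (simp add: fun_upd_def)
  from b_priv[OF this] show ?case by simp
qed simp

lemma builds_reflaml:
  assumes "\<forall>d\<in>set ds0. \<nu> d \<notin> dom R \<and> \<nu> d \<notin> N \<and> refty (rr d) = TArrow (argty (\<nu> d)) (resty (\<nu> d))"
    and "distinct (map \<nu> ds0)"
    and "builds N ds (upds \<nu> g R ds0) (upds rr (\<lambda>d. MethT (\<nu> d)) S ds0) P A res"
  shows "builds N (map (\<lambda>d. RefLam (rr d) (fst (g d)) (snd (g d))) ds0 @ ds) R S P A res"
  using assms
proof (induct ds0 arbitrary: R S)
  case (Cons d ds0)
  have c1: "\<forall>d'\<in>set ds0. \<nu> d' \<notin> dom (R(\<nu> d \<mapsto> g d)) \<and> \<nu> d' \<notin> N \<and> refty (rr d') = TArrow (argty (\<nu> d')) (resty (\<nu> d'))"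
    using Cons(2,3) by (fastforce simp: image_iff)
  have d2: "distinct (map \<nu> ds0)" using Cons(3) by simp
  have b2: "builds N ds (upds \<nu> g (R(\<nu> d \<mapsto> g d)) ds0) (upds rr (\<lambda>d. MethT (\<nu> d)) (S(rr d \<mapsto> MethT (\<nu> d))) ds0) P A res"
    using Cons(4) by simp
  have "builds N (map (\<lambda>d. RefLam (rr d) (fst (g d)) (snd (g d))) ds0 @ ds) (R(\<nu> d \<mapsto> g d))
           (S(rr d \<mapsto> MethT (\<nu> d))) P A res"
    by (rule Cons(1)[OF c1 d2 b2])
  then have "builds N (map (\<lambda>d. RefLam (rr d) (fst (g d)) (snd (g d))) ds0 @ ds) (R(\<nu> d \<mapsto> (fst (g d), snd (g d))))
           (S(rr d \<mapsto> MethT (\<nu> d))) P A res" by simp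
  then show ?case using Cons(2) by (auto intro!: b_reflam)
qed simp

fun rnum :: "ref \<Rightarrow> nat" where "rnum (Ref n t) = n"

lemma rnum_cnt[simp]: "rnum (cnt B) = B" by (simp add: cnt_def)
lemma rnum_rref[simp]: "rnum (rref B d) = B + 1 + mnum d" by (cases d) simp


lemma concat_map_single: "concat (map (\<lambda>x. [f x]) xs) = map f xs"
  by (induct xs) auto

lemma concat_map_nil: "concat (map (\<lambda>x. []) xs) = []"
  by (induct xs) auto

context cl begin

definition gB :: "meth \<Rightarrow> var \<times> tm" where "gB m = (vY (argty m), BODY m)"
definition gL :: "ty \<Rightarrow> var \<times> tm" where "gL b = (vW, DISP b)"
definition gI :: "meth \<Rightarrow> var \<times> tm" where
  "gI d = (vX (argty d), App (Deref (rref B d)) (VarT (vX (argty d))))"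

definition R1 where "R1 = upds (\<lambda>m. m) gB Map.empty A0l"
definition R2 where "R2 = upds (\<lambda>m. m) gB R1 Fl"
definition R3 where "R3 = upds (loopname K) gL R2 tys"
definition Rc where "Rc = upds (initn K) gI R3 Dl"
definition Sc where "Sc = upds (rref B) (\<lambda>d. MethT (initn K d)) (Map.empty(cnt B \<mapsto> IntT 0)) Dl"

lemma mnum_lt: "m \<in> A0 \<union> P0 \<union> allnames \<Longrightarrow> mnum m < K"
  using Kbig unfolding A0_def P0_def allnames_def by blast

lemma Stat_sub: "Stat \<subseteq> A0 \<union> P0 \<union> allnames"
  unfolding Stat_def F_def by auto

lemma F_all: "F \<subseteq> allnames"
  unfolding F_def by auto

lemma dom_R2: "dom R2 = A0 \<union> F"
  unfolding R2_def R1_def by (simp add: dom_upds Fl A0_def)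

lemma dom_R3: "dom R3 = A0 \<union> F \<union> loopname K ` set tys"
  unfolding R3_def by (simp add: dom_upds dom_R2)

lemma dom_Rc: "dom Rc = A0 \<union> F \<union> loopname K ` set tys \<union> initn K ` Dset"
  unfolding Rc_def by (simp add: dom_upds dom_R3 Dl)

lemma not_loop: "m \<in> A0 \<union> P0 \<union> allnames \<Longrightarrow> m \<notin> loopname K ` X"
  using mnum_lt by (force)

lemma not_initn: "mnum m \<le> K \<Longrightarrow> m \<notin> initn K ` X"
  by force

lemma Rc_pub: "m \<in> A0 \<union> F \<Longrightarrow> Rc m = Some (vY (argty m), BODY m)"
proof -
  assume m: "m \<in> A0 \<union> F"
  have mk: "mnum m < K" using m mnum_lt F_all by blast
  have "Rc m = R3 m" unfolding Rc_def using mk by (intro upds_other) force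
  also have "\<dots> = R2 m" unfolding R3_def using mk by (intro upds_other) force
  also have "\<dots> = Some (gB m)"
  proof (cases "m \<in> set Fl")
    case True then show ?thesis unfolding R2_def by (intro upds_in) auto
  next
    case False
    then have "R2 m = R1 m" unfolding R2_def by (intro upds_other) auto
    moreover have "m \<in> set A0l" using m False Fl unfolding A0_def by auto
    ultimately show ?thesis unfolding R1_def by (auto intro: upds_in)
  qed
  finally show ?thesis by (simp add: gB_def)
qed

lemma Rc_loop: "b \<in> set tys \<Longrightarrow> Rc (loopname K b) = Some (vW, DISP b)"
proof -
  assume b: "b \<in> set tys"
  have ne: "loopname K b \<notin> initn K ` set Dl"
  proof
    assume "loopname K b \<in> initn K ` set Dl"
    then obtain d where "loopname K b = initn K d" by blast
    then have "mnum (loopname K b) = mnum (initn K d)" by simp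
    then show False by simp
  qed
  have "Rc (loopname K b) = R3 (loopname K b)" unfolding Rc_def using ne by (rule upds_other)
  also have "\<dots> = Some (gL b)" unfolding R3_def using b by (intro upds_in) (auto simp: inj_on_def loopname_inj)
  finally show ?thesis by (simp add: gL_def)
qed

lemma Rc_names: "dom Rc \<inter> allnames \<subseteq> A0 \<union> F"
proof
  fix m assume m: "m \<in> dom Rc \<inter> allnames"
  then have "mnum m < K" using mnum_lt by blast
  then show "m \<in> A0 \<union> F" using m unfolding dom_Rc by force
qed

lemma clsim_Rc: "clsim tau A0l P0l AF D K B Rc"
  unfolding clsim_def clsim_axioms_def
  using cl_axioms Rc_pub Rc_loop Rc_names by blast

lemma Sc_cnt: "Sc (cnt B) = Some (IntT 0)"
  unfolding Sc_def by (subst upds_other) auto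

lemma dm_c: "defined_meths cdecls = A0l @ Fl @ map (loopname K) tys"
  unfolding cdecls_def defined_meths_def by (simp add: concat_map_single concat_map_nil comp_def)

lemma am_c: "abstract_meths cdecls = P0l"
  unfolding cdecls_def abstract_meths_def by (simp add: concat_map_single concat_map_nil comp_def)

lemma dr_c: "defined_refs cdecls = cnt B # map (rref B) Dl"
  unfolding cdecls_def defined_refs_def by (simp add: concat_map_single concat_map_nil comp_def)

lemma lt_c: "lib_terms cdecls = map (\<lambda>m. Lam (vY (argty m)) (BODY m)) A0l @ map (\<lambda>m. Lam (vY (argty m)) (BODY m)) Fl
   @ map (\<lambda>b. Lam vW (DISP b)) tys @ map (\<lambda>d. Lam (vX (argty d)) (App (Deref (rref B d)) (VarT (vX (argty d))))) Dl"
  unfolding cdecls_def lib_terms_def by (simp add: concat_map_single concat_map_nil comp_def)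

lemma tys_distinct: "distinct tys"
  unfolding tys_def by simp

lemma AF_props: "A0 \<inter> F = {}" "P0 \<inter> A0 = {}" "P0 \<inter> F = {}"
proof -
  have a: "F \<subseteq> AF" "F \<inter> A0 = {}" unfolding F_def by auto
  have b: "D \<inter> AF = {}" "A0 \<subseteq> AF" "P0 \<subseteq> D" using DAF A0AF P0D unfolding A0_def P0_def by auto
  show "A0 \<inter> F = {}" "P0 \<inter> A0 = {}" "P0 \<inter> F = {}" using a b by blast+
qed

lemma prog_names_c: "prog_names cdecls \<union> meths (LOOP TUnit) \<subseteq> A0 \<union> P0 \<union> allnames \<union> loopname K ` UNIV"
proof -
  have "\<Union>(meths ` set (lib_terms cdecls)) \<subseteq> A0 \<union> P0 \<union> allnames \<union> loopname K ` UNIV"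
    using BODY_props DISP_props Stat_sub unfolding lt_c by fastforce
  then show ?thesis unfolding prog_names_def dm_c am_c using Fl F_all
    by (auto simp: A0_def P0_def)
qed

lemma Nk_lemma: "\<forall>m\<in>prog_names cdecls \<union> meths (LOOP TUnit). mnum m \<le> K"
proof
  fix m assume "m \<in> prog_names cdecls \<union> meths (LOOP TUnit)"
  then have "m \<in> A0 \<union> P0 \<union> allnames \<union> loopname K ` UNIV" using prog_names_c by blast
  then show "mnum m \<le> K" using mnum_lt by fastforce
qed

lemma r_lemma: "\<forall>d\<in>set Dl. initn K d \<notin> dom R3 \<and> initn K d \<notin> prog_names cdecls \<union> meths (LOOP TUnit)
   \<and> refty (rref B d) = TArrow (argty (initn K d)) (resty (initn K d))"
proof
  fix d assume "d \<in> set Dl"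
  have k: "mnum (initn K d) > K" by simp
  have "initn K d \<notin> dom R3"
  proof
    assume "initn K d \<in> dom R3"
    then have "initn K d \<in> A0 \<union> F \<union> loopname K ` set tys" unfolding dom_R3 .
    then show False
    proof (elim UnE)
      assume "initn K d \<in> A0" then show False using mnum_lt k by fastforce
    next
      assume "initn K d \<in> F" then show False using mnum_lt k F_all by fastforce
    next
      assume "initn K d \<in> loopname K ` set tys" then show False using k by fastforce
    qed
  qed
  moreover have "initn K d \<notin> prog_names cdecls \<union> meths (LOOP TUnit)"
  proof
    assume "initn K d \<in> prog_names cdecls \<union> meths (LOOP TUnit)"
    then have "mnum (initn K d) \<le> K" using Nk_lemma by blast
    with k show False by simp
  qed
  ultimately show "initn K d \<notin> dom R3 \<and> initn K d \<notin> prog_names cdecls \<union> meths (LOOP TUnit)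
   \<and> refty (rref B d) = TArrow (argty (initn K d)) (resty (initn K d))"
    by simp
qed

lemma cd_lemma: "cdecls = map Abstract P0l @ (map (\<lambda>m. PublicM m (fst (gB m)) (snd (gB m))) A0l
     @ (map (\<lambda>m. PrivM ((\<lambda>m. m) m) (fst (gB m)) (snd (gB m))) Fl @ (map (\<lambda>b. PrivM (loopname K b) (fst (gL b)) (snd (gL b))) tys
     @ (RefInt (cnt B) 0 # (map (\<lambda>d. RefLam (rref B d) (fst (gI d)) (snd (gI d))) Dl @ [])))))"
  unfolding cdecls_def gB_def gL_def gI_def by simp

lemma di_lemma: "distinct (map (initn K) Dl)"
  using Dl by (simp add: distinct_map inj_on_def initn_inj)

lemma client_builds_ok: "client_builds client (LOOP TUnit) Rc Sc (set A0l) (set P0l)"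
proof -
  let ?N = "prog_names cdecls \<union> meths (LOOP TUnit)"
  have b6: "builds ?N [] Rc Sc (set A0l) (set P0l) (Rc, Sc, set A0l, set P0l)" by (rule b_nil)
  have b5: "builds ?N (map (\<lambda>d. RefLam (rref B d) (fst (gI d)) (snd (gI d))) Dl @ []) R3 (Map.empty(cnt B \<mapsto> IntT 0))
                 (set A0l) (set P0l) (Rc, Sc, set A0l, set P0l)"
    apply (rule builds_reflaml[OF r_lemma di_lemma])
    unfolding Rc_def Sc_def by (rule b6[unfolded Rc_def Sc_def])
  have b4: "builds ?N (RefInt (cnt B) 0 # (map (\<lambda>d. RefLam (rref B d) (fst (gI d)) (snd (gI d))) Dl @ [])) R3 Map.empty
                 (set A0l) (set P0l) (Rc, Sc, set A0l, set P0l)"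
    by (rule b_refint) (rule b5)
  have b3: "builds ?N (map (\<lambda>b. PrivM (loopname K b) (fst (gL b)) (snd (gL b))) tys
     @ (RefInt (cnt B) 0 # (map (\<lambda>d. RefLam (rref B d) (fst (gI d)) (snd (gI d))) Dl @ []))) R2 Map.empty
                 (set A0l) (set P0l) (Rc, Sc, set A0l, set P0l)"
    apply (rule builds_privl) using b4 unfolding R3_def .
  have b2: "builds ?N (map (\<lambda>m. PrivM ((\<lambda>m. m) m) (fst (gB m)) (snd (gB m))) Fl @ (map (\<lambda>b. PrivM (loopname K b) (fst (gL b)) (snd (gL b))) tys
     @ (RefInt (cnt B) 0 # (map (\<lambda>d. RefLam (rref B d) (fst (gI d)) (snd (gI d))) Dl @ [])))) R1 Map.empty
                 (set A0l) (set P0l) (Rc, Sc, set A0l, set P0l)"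
    apply (rule builds_privl) using b3 unfolding R2_def .
  have b1: "builds ?N (map (\<lambda>m. PublicM m (fst (gB m)) (snd (gB m))) A0l
     @ (map (\<lambda>m. PrivM ((\<lambda>m. m) m) (fst (gB m)) (snd (gB m))) Fl @ (map (\<lambda>b. PrivM (loopname K b) (fst (gL b)) (snd (gL b))) tys
     @ (RefInt (cnt B) 0 # (map (\<lambda>d. RefLam (rref B d) (fst (gI d)) (snd (gI d))) Dl @ []))))) Map.empty Map.empty
                 {} (set P0l) (Rc, Sc, set A0l, set P0l)"
    apply (rule builds_publ) using b2 unfolding R1_def by simp
  have b0': "builds ?N (map Abstract P0l @ (map (\<lambda>m. PublicM m (fst (gB m)) (snd (gB m))) A0l
     @ (map (\<lambda>m. PrivM ((\<lambda>m. m) m) (fst (gB m)) (snd (gB m))) Fl @ (map (\<lambda>b. PrivM (loopname K b) (fst (gL b)) (snd (gL b))) tys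
     @ (RefInt (cnt B) 0 # (map (\<lambda>d. RefLam (rref B d) (fst (gI d)) (snd (gI d))) Dl @ []))))))
      Map.empty Map.empty {} {} (Rc, Sc, set A0l, set P0l)"
    apply (rule builds_absl) using b1 by simp
  note b0 = b0'[folded cd_lemma]
  then show ?thesis unfolding client_def by simp
qed

end


context cl begin

lemma tys_mem': "TUnit \<in> set tys" "m \<in> A0 \<union> F \<Longrightarrow> resty m \<in> set tys"
  unfolding tys_def using Fl by (auto simp: A0_def)

lemma Dset_eq: "allnames - Stat = set Dl" using Dl unfolding Dset_def by simp

lemma lam_body_wt: "wt (Lam (vY (argty m)) (BODY m)) (TArrow (argty m) (resty m))"
  using wt_lam[OF BODY_wt[of m], of "vY (argty m)"] by simp

lemma lam_loop_wt: "wt (Lam vW (DISP b)) (TArrow (argty (loopname K b)) (resty (loopname K b)))"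
  using wt_lam[OF DISP_wt[of b], of vW] by simp

lemma lam_init_wt: "wt (Lam (vX (argty d)) (App (Deref (rref B d)) (VarT (vX (argty d))))) (refty (rref B d))"
proof -
  have "wt (App (Deref (rref B d)) (VarT (vX (argty d)))) (resty d)"
    using wt_app[OF wt_deref[of "rref B d", simplified] wt_var[of "vX (argty d)", simplified]] by simp
  from wt_lam[OF this, of "vX (argty d)"] show ?thesis by simp
qed

lemma decls_typed: "\<forall>d\<in>set cdecls. decl_typed d"
  unfolding cdecls_def using lam_body_wt lam_loop_wt lam_init_wt by auto

lemma wfl: "wf_library cdecls"
proof -
  have c1: "\<exists>ms B'. cdecls = map Abstract ms @ B' \<and> (\<forall>d\<in>set B'. \<not> is_abstract d)"
    by (rule exI[of _ P0l]) (auto simp: cdecls_def)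
  have lpn: "\<And>m b. m \<in> A0 \<union> P0 \<union> allnames \<Longrightarrow> m \<noteq> loopname K b"
  proof -
    fix m b assume "m \<in> A0 \<union> P0 \<union> allnames"
    then have "mnum m < K" by (rule mnum_lt)
    then show "m \<noteq> loopname K b" by auto
  qed
  have lpn2: "\<And>b. loopname K b \<notin> set A0l" "\<And>b. loopname K b \<notin> set Fl" "\<And>b. loopname K b \<notin> set P0l"
    using lpn F_all Fl unfolding A0_def P0_def by blast+
  have c2: "distinct (defined_meths cdecls)"
    unfolding dm_c using dA Fl tys_distinct AF_props lpn2
    by (auto simp: distinct_map inj_on_def loopname_inj A0_def)
  have c3: "distinct (defined_refs cdecls)"
    unfolding dr_c using Dl by (auto simp: distinct_map inj_on_def rref_inj)
  have c4: "set (abstract_meths cdecls) \<inter> set (defined_meths cdecls) = {}"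
    unfolding dm_c am_c using AF_props lpn2 Fl by (auto simp: A0_def P0_def)
  have c6: "\<forall>r\<in>set (defined_refs cdecls). \<not> is_prod (refty r)"
    unfolding dr_c by auto
  define Q where "Q M \<longleftrightarrow> source_term M \<and> meths M \<subseteq> set A0l \<union> set Fl \<union> loopname K ` set tys \<union> set P0l
      \<and> refs M \<subseteq> insert (cnt B) (rref B ` set Dl)" for M
  have st: "Stat \<subseteq> set A0l \<union> set P0l \<union> set Fl" unfolding Stat_def A0_def P0_def using Fl by auto
  have f1: "Q (Lam (vY (argty m)) (BODY m))" if "m \<in> set A0l \<union> set Fl" for m
  proof -
    have "resty m \<in> set tys" using tys_mem'(2)[of m] that Fl by (auto simp: A0_def)
    then show ?thesis using BODY_props[of m] Dset_eq unfolding Q_def source_term_def by auto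
  qed
  have f2: "Q (Lam vW (DISP b))" if "b \<in> set tys" for b
    using that DISP_props[of b] st Dset_eq unfolding Q_def source_term_def by auto
  have f3: "Q (Lam (vX (argty d)) (App (Deref (rref B d)) (VarT (vX (argty d)))))" if "d \<in> set Dl" for d
    using that unfolding Q_def source_term_def by auto
  have c7: "\<forall>M\<in>set (lib_terms cdecls). source_term M
          \<and> meths M \<subseteq> set (defined_meths cdecls) \<union> set (abstract_meths cdecls)
          \<and> refs M \<subseteq> set (defined_refs cdecls)"
  proof
    fix M assume M: "M \<in> set (lib_terms cdecls)"
    then have "Q M" unfolding lt_c using f1 f2 f3 by auto
    then show "source_term M \<and> meths M \<subseteq> set (defined_meths cdecls) \<union> set (abstract_meths cdecls)
          \<and> refs M \<subseteq> set (defined_refs cdecls)"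
      unfolding Q_def dm_c am_c dr_c by auto
  qed
  show ?thesis unfolding wf_library_def using c1 c2 c3 c4 decls_typed c6 c7 by blast
qed

lemma wf_client_ok: "wf_client client"
  unfolding client_def using wfl LOOP_wt tys_mem'(1)
  by (auto simp: source_term_def dm_c)

lemma good_client_ok: "good_client client"
proof -
  have "\<forall>N\<in>set (lib_terms cdecls). \<not> has_assert N"
    unfolding lt_c using BODY_props DISP_props by auto
  then show ?thesis unfolding client_def by simp
qed

lemma dom_Sc: "dom Sc = insert (cnt B) (rref B ` set Dl)"
  unfolding Sc_def by (simp add: dom_upds)

end


theorem mainTheorem4:
  fixes L :: library and \<tau> :: "move list" and \<rho> :: config
  assumes "wf_library L"
    and "(\<tau>, \<rho>) \<in> sem_lib L"
  shows "\<exists>C. wf_client C \<and> good_client C \<and> compatible L C \<and> (\<exists>\<rho>'. (\<tau>, \<rho>') \<in> sem_client C)"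
proof -
  note wf = assms(1)
  from assms(2) obtain R0 S0 P0 A0 where b: "lib_builds L R0 S0 P0 A0"
    and tr: "ctrace (OC [] 0 R0 S0 P0 A0 0) \<tau> \<rho>" unfolding sem_lib_def by auto
  obtain D AF where lf: "dom R0 \<subseteq> D" "A0 \<subseteq> AF" "D \<inter> AF = {}" "\<forall>n<length \<tau>. MF P0 A0 D AF \<tau> n"
    using lib_facts[OF wf b tr] by blast
  note bf = lib_build_facts[OF wf b]
  define A0l where "A0l = remdups (abstract_meths L)"
  define P0l where "P0l = remdups (concat (map decl_pub L))"
  have sA: "set A0l = A0" "set P0l = P0" using bf by (auto simp: A0l_def P0l_def)
  define X where "X = set A0l \<union> set P0l \<union> (\<Union>i<length \<tau>. insert (mname (\<tau> ! i)) (meths (mval (\<tau> ! i)))) \<union> dom R0"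
  have fX: "finite X" using bf unfolding X_def by auto
  define K where "K = Suc (Max (insert 0 (mnum ` X)))"
  have Kb: "\<forall>m\<in>X. mnum m < K"
  proof
    fix m assume "m \<in> X"
    then have "mnum m \<le> Max (insert 0 (mnum ` X))" using fX by (intro Max_ge) auto
    then show "mnum m < K" unfolding K_def by simp
  qed
  have fS: "finite (dom S0)" using bf by simp
  define B where "B = Suc (Max (insert 0 (rnum ` dom S0)))"
  have Bb: "\<forall>r\<in>dom S0. rnum r < B"
  proof
    fix r assume "r \<in> dom S0"
    then have "rnum r \<le> Max (insert 0 (rnum ` dom S0))" using fS by (intro Max_ge) auto
    then show "rnum r < B" unfolding B_def by simp
  qed
  have clax: "cl \<tau> A0l P0l AF D K"
  proof
    show "\<forall>n<length \<tau>. MF (set P0l) (set A0l) D AF \<tau> n" using lf(4) sA by simp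
    show "D \<inter> AF = {}" by (rule lf(3))
    show "set A0l \<subseteq> AF" using lf(2) sA by simp
    have P0R: "P0 \<subseteq> dom R0" using bf by blast
    show "set P0l \<subseteq> D" using P0R lf(1) sA by blast
    show "distinct A0l" "distinct P0l" by (simp_all add: A0l_def P0l_def)
    show "\<forall>m \<in> set A0l \<union> set P0l \<union> (\<Union>i<length \<tau>. insert (mname (\<tau> ! i)) (meths (mval (\<tau> ! i)))). mnum m < K"
      using Kb unfolding X_def by blast
  qed
  interpret c: cl \<tau> A0l P0l AF D K B by (rule clax)
  interpret s: clsim \<tau> A0l P0l AF D K B c.Rc by (rule c.clsim_Rc)
  obtain \<rho>' where ct: "ctrace (PC [] (c.LOOP TUnit) c.Rc c.Sc (set A0l) (set P0l) 0) \<tau> \<rho>'"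
    using s.sim_full[of c.Sc "set A0l" "set P0l"] c.Sc_cnt by (auto simp: c.A0_def c.P0_def)
  have cb: "client_builds c.client (c.LOOP TUnit) c.Rc c.Sc (set A0l) (set P0l)" by (rule c.client_builds_ok)
  have dS: "dom S0 \<inter> dom c.Sc = {}"
  proof -
    have "\<forall>r\<in>dom c.Sc. rnum r \<ge> B" unfolding c.dom_Sc by auto
    then show ?thesis using Bb by force
  qed
  have dR: "dom R0 \<inter> dom c.Rc = {}"
  proof -
    have r0: "\<forall>m\<in>dom R0. mnum m < K" using Kb unfolding X_def by blast
    have "c.F \<subseteq> AF" unfolding c.F_def by auto
    then have dAF: "dom R0 \<inter> (c.A0 \<union> c.F) = {}" using bf lf sA unfolding c.A0_def by blast
    have "m \<notin> dom c.Rc" if m: "m \<in> dom R0" for m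
    proof
      assume "m \<in> dom c.Rc"
      then consider "m \<in> c.A0 \<union> c.F" | bb where "m = loopname K bb" | d where "m = initn K d"
        unfolding c.dom_Rc by blast
      then show False
      proof cases
        case 1 then show ?thesis using dAF m by blast
      next
        case 2 then have "mnum m = K" by simp
        then show ?thesis using r0 m by force
      next
        case 3 then have "mnum m > K" by simp
        then show ?thesis using r0 m by force
      qed
    qed
    then show ?thesis by blast
  qed
  have comp: "compatible L c.client"
    unfolding compatible_def using b cb dS dR sA by blast
  have sem: "(\<tau>, \<rho>') \<in> sem_client c.client"
    unfolding sem_client_def using cb ct by blast
  show ?thesis using c.wf_client_ok c.good_client_ok comp sem by blast
qed


end
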